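(* The set $\{S_\lambda:\lambda\in\Lambda^{\bullet}(n,r)\}$ is a complete set of representatives of the isomorphism classes of simple $\mathbf{S}_0(n,r)$-modules.
   Context: Setting: $n,r\ge 0$; $\Lambda(n,r)$ is the set of weak compositions of $r$ with $n$ parts, and $\Lambda^\bullet(n,r)$ the subset where $\lambda_i=0$ forces $\lambda_j=0$ for $j>i$. $M_n(r)$ is the set of $n\times n$ nonnegative integer matrices with entry sum $r$; $\mathrm{ro}(A),\mathrm{co}(A)$ are the row and column sum vectors; $E_{a,b}$ are matrix units; $D_\lambda=\mathrm{diag}(\lambda)$. $\mathbf{S}_0(n,r)=S_0(n,r)\otimes_{\mathbb Z}\mathbb C$ is the complex $0$-Schur algebra (the $q=0$ specialization of the Dipper–James $q$-Schur algebra), with Jensen–Su standard basis $\{e_A:A\in M_n(r)\}$: - $e_Ae_B=0$ unless $\mathrm{co}(A)=\mathrm{ro}(B)$, in which case $e_Ae_B=e_C$ for a unique $C$. - $k_\lambda=e_{D_\lambda}$ with $k_\lambda e_A=\delta_{\lambda,\mathrm{ro}(A)}e_A$ and $e_Ak_\lambda=\delta_{\lambda,\mathrm{co}(A)}e_A$. - $e_i=\sum_\lambda e_{D_\lambda-E_{i+1,i+1}+E_{i,i+1}}$ and $f_i=\sum_\lambda e_{D_\lambda-E_{i,i}+E_{i+1,i}}$ ($1\le i\le n-1$); the $e_i,f_i,k_\lambda$ generate $\mathbf S_0(n,r)$. - For $\mathrm{ro}(A)=\lambda$: $e_ie_A=e_{A+E_{i,p}-E_{i+1,p}}$ if $\lambda_{i+1}>0$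 ($p$ the largest $j$ with $a_{i+1,j}>0$), else $0$. - $f_ie_A=e_{A-E_{i,q}+E_{i+1,q}}$ if $\lambda_i>0$ ($q$ the smallest $j$ with $a_{i,j}>0$), else $0$. $P_\lambda$ (Jensen–Su–Yang): $\max(\lambda)$ is the set of strong compositions $\alpha$ of $n$ such that, cutting $\lambda$ into consecutive pieces of lengths $\alpha_1,\alpha_2,\dots$, each piece is $(0)$ or has nonzero first and last entries. A matrix is open if $a_{i,j}a_{i',j'}=0$ for $i<i'$, $j<j'$. $A$ is open on columns w.r.t. $\alpha$ if, for each block of consecutive column indices determined by $\alpha$, the matrix keeping only those columns (others zero) is open. $B^{\lambda,\alpha}=\{e_A:\mathrm{co}(A)=\lambda,\ A\text{ open on columns w.r.t. }\alpha\}$ and $B^\lambda=\{e_A:\mathrm{co}(A)=\lambda\}\setminus\bigcup_{\alpha\in\max(\lambda)\setminus\{(1^n)\}}B^{\lambda,\alpha}$. $P_\lambda=\mathbb CB^\lambda$ with $b\cdot e_A=e_B$ if $be_A=e_B$ in $S_0(n,r)$ and $e_B\in B^\lambda$, else $0$. It is known (Jensen–Su–Yang) that $\{P_\lambda:\lambda\in\Lambda^\bullet(n,r)\}$ is a complete set of representatives of the projective indecomposable $\mathbf S_0(n,r)$-modules. $\mathrm{cb}(\lambda)$ is the set of $n\times n$ column block diagonal matrices ($a_{i,j}>0\Rightarrow a_{i',s}=0$ for all $i'\le i$, $s>j$) with $\mathrm{co}(A)=\lambda$, and $\beta^\lambda=\{e_A:A\in\mathrm{cb}(\lambda)\}\subseteq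 B^\lambda$. $N_\lambda$ is the span of $B^\lambda\setminus\beta^\lambda$, which is a submodule of $P_\lambda$, and $S_\lambda:=P_\lambda/N_\lambda$. *)

theory Defs
  imports Complex_Main "HOL-Library.Function_Algebras"
begin

(* Conventions: indices are 0-based (rows/columns 0..n-1 instead of 1..n).
   An n x n matrix is a function nat => nat => nat vanishing outside {0..<n}^2;
   a weak composition is a function nat => nat vanishing from n on.          *)

type_synonym mat = "nat \<Rightarrow> nat \<Rightarrow> nat"
type_synonym vect = "mat \<Rightarrow> complex"   (* C-linear combinations of basis vectors e_A *)

definition mats :: "nat \<Rightarrow> nat \<Rightarrow> mat set" where
  "mats n r = {A. (\<forall>i j. (n \<le> i \<or> n \<le> j) \<longrightarrow> A i j = 0) \<and> (\<Sum>i<n. \<Sum>j<n. A i j) = r}"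

definition comps :: "nat \<Rightarrow> nat \<Rightarrow> (nat \<Rightarrow> nat) set" where
  "comps n r = {la. (\<forall>i. n \<le> i \<longrightarrow> la i = 0) \<and> (\<Sum>i<n. la i) = r}"

definition comps_bullet :: "nat \<Rightarrow> nat \<Rightarrow> (nat \<Rightarrow> nat) set" where
  "comps_bullet n r = {la \<in> comps n r. \<forall>i j. i < j \<longrightarrow> la i = 0 \<longrightarrow> la j = 0}"

definition ro :: "nat \<Rightarrow> mat \<Rightarrow> nat \<Rightarrow> nat" where
  "ro n A = (\<lambda>i. \<Sum>j<n. A i j)"

definition co :: "nat \<Rightarrow> mat \<Rightarrow> nat \<Rightarrow> nat" where
  "co n A = (\<lambda>j. \<Sum>i<n. A i j)"

definition mplus :: "mat \<Rightarrow> nat \<Rightarrow> nat \<Rightarrow> mat" where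
  "mplus A i j = A(i := (A i)(j := Suc (A i j)))"

definition mminus :: "mat \<Rightarrow> nat \<Rightarrow> nat \<Rightarrow> mat" where
  "mminus A i j = A(i := (A i)(j := A i j - 1))"

definition ebas :: "mat \<Rightarrow> vect" where
  "ebas A = (\<lambda>B. if B = A then 1 else 0)"

definition fscale :: "complex \<Rightarrow> vect \<Rightarrow> vect" where
  "fscale c v = (\<lambda>B. c * v B)"

definition lin_ext :: "nat \<Rightarrow> nat \<Rightarrow> (mat \<Rightarrow> vect) \<Rightarrow> vect \<Rightarrow> vect" where
  "lin_ext n r g v = (\<Sum>A\<in>mats n r. fscale (v A) (g A))"

(* left multiplication by the generators k_lambda, e_i, f_i on the basis e_A
   (the left regular representation of S_0(n,r)); e_i, f_i use rows i, i+1 *)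
definition K_op :: "nat \<Rightarrow> nat \<Rightarrow> (nat \<Rightarrow> nat) \<Rightarrow> vect \<Rightarrow> vect" where
  "K_op n r la = lin_ext n r (\<lambda>A. if ro n A = la then ebas A else 0)"

definition E_op :: "nat \<Rightarrow> nat \<Rightarrow> nat \<Rightarrow> vect \<Rightarrow> vect" where
  "E_op n r i = lin_ext n r (\<lambda>A. if 0 < ro n A (Suc i)
      then (let p = (GREATEST j. 0 < A (Suc i) j) in ebas (mminus (mplus A i p) (Suc i) p))
      else 0)"

definition F_op :: "nat \<Rightarrow> nat \<Rightarrow> nat \<Rightarrow> vect \<Rightarrow> vect" where
  "F_op n r i = lin_ext n r (\<lambda>A. if 0 < ro n A i
      then (let q = (LEAST j. 0 < A i j) in ebas (mplus (mminus A i q) (Suc i) q))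
      else 0)"

(* S_0(n,r) (complexified), realised faithfully as the algebra of operators on
   C M_n(r) generated by left multiplication by e_i, f_i, k_lambda *)
inductive_set S0 :: "nat \<Rightarrow> nat \<Rightarrow> (vect \<Rightarrow> vect) set" for n r where
  zero: "0 \<in> S0 n r"
| gen_k: "la \<in> comps n r \<Longrightarrow> K_op n r la \<in> S0 n r"
| gen_e: "Suc i < n \<Longrightarrow> E_op n r i \<in> S0 n r"
| gen_f: "Suc i < n \<Longrightarrow> F_op n r i \<in> S0 n r"
| add: "a \<in> S0 n r \<Longrightarrow> b \<in> S0 n r \<Longrightarrow> a + b \<in> S0 n r"
| smult: "a \<in> S0 n r \<Longrightarrow> (\<lambda>v. fscale c (a v)) \<in> S0 n r"
| mult: "a \<in> S0 n r \<Longrightarrow> b \<in> S0 n r \<Longrightarrow> a \<circ> b \<in> S0 n r"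

definition S0one :: "nat \<Rightarrow> nat \<Rightarrow> vect \<Rightarrow> vect" where
  "S0one n r = lin_ext n r ebas"

definition is_module :: "nat \<Rightarrow> nat \<Rightarrow> (complex \<Rightarrow> 'm::ab_group_add \<Rightarrow> 'm) \<Rightarrow> 'm set
     \<Rightarrow> ((vect \<Rightarrow> vect) \<Rightarrow> 'm \<Rightarrow> 'm) \<Rightarrow> bool" where
  "is_module n r sm M act \<longleftrightarrow>
     vector_space sm \<and> module.subspace sm M \<and>
     (\<forall>a\<in>S0 n r. \<forall>x\<in>M. act a x \<in> M) \<and>
     (\<forall>a\<in>S0 n r. \<forall>x\<in>M. \<forall>y\<in>M. act a (x + y) = act a x + act a y) \<and>
     (\<forall>a\<in>S0 n r. \<forall>c. \<forall>x\<in>M. act a (sm c x) = sm c (act a x)) \<and>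
     (\<forall>a\<in>S0 n r. \<forall>b\<in>S0 n r. \<forall>x\<in>M. act (a + b) x = act a x + act b x) \<and>
     (\<forall>a\<in>S0 n r. \<forall>c. \<forall>x\<in>M. act (\<lambda>v. fscale c (a v)) x = sm c (act a x)) \<and>
     (\<forall>a\<in>S0 n r. \<forall>b\<in>S0 n r. \<forall>x\<in>M. act (a \<circ> b) x = act a (act b x)) \<and>
     (\<forall>x\<in>M. act (S0one n r) x = x)"

definition is_submodule :: "nat \<Rightarrow> nat \<Rightarrow> (complex \<Rightarrow> 'm::ab_group_add \<Rightarrow> 'm) \<Rightarrow> 'm set
     \<Rightarrow> ((vect \<Rightarrow> vect) \<Rightarrow> 'm \<Rightarrow> 'm) \<Rightarrow> 'm set \<Rightarrow> bool" where
  "is_submodule n r sm M act N \<longleftrightarrow>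
     N \<subseteq> M \<and> module.subspace sm N \<and> (\<forall>a\<in>S0 n r. \<forall>x\<in>N. act a x \<in> N)"

definition is_simple_module :: "nat \<Rightarrow> nat \<Rightarrow> (complex \<Rightarrow> 'm::ab_group_add \<Rightarrow> 'm) \<Rightarrow> 'm set
     \<Rightarrow> ((vect \<Rightarrow> vect) \<Rightarrow> 'm \<Rightarrow> 'm) \<Rightarrow> bool" where
  "is_simple_module n r sm M act \<longleftrightarrow>
     is_module n r sm M act \<and> M \<noteq> {0} \<and>
     (\<forall>N. is_submodule n r sm M act N \<longrightarrow> N = {0} \<or> N = M)"

definition module_iso :: "nat \<Rightarrow> nat
     \<Rightarrow> (complex \<Rightarrow> 'm::ab_group_add \<Rightarrow> 'm) \<Rightarrow> 'm set \<Rightarrow> ((vect \<Rightarrow> vect) \<Rightarrow> 'm \<Rightarrow> 'm)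
     \<Rightarrow> (complex \<Rightarrow> 'k::ab_group_add \<Rightarrow> 'k) \<Rightarrow> 'k set \<Rightarrow> ((vect \<Rightarrow> vect) \<Rightarrow> 'k \<Rightarrow> 'k) \<Rightarrow> bool" where
  "module_iso n r sm M act sm' M' act' \<longleftrightarrow>
     (\<exists>f. bij_betw f M M' \<and>
          (\<forall>x\<in>M. \<forall>y\<in>M. f (x + y) = f x + f y) \<and>
          (\<forall>c. \<forall>x\<in>M. f (sm c x) = sm' c (f x)) \<and>
          (\<forall>a\<in>S0 n r. \<forall>x\<in>M. f (act a x) = act' a (f x)))"

definition strong_comps :: "nat \<Rightarrow> nat list set" where
  "strong_comps n = {al. (\<forall>k\<in>set al. 0 < k) \<and> sum_list al = n}"

definition piece_start :: "nat list \<Rightarrow> nat \<Rightarrow> nat" where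
  "piece_start al k = sum_list (take k al)"

definition maxset :: "nat \<Rightarrow> (nat \<Rightarrow> nat) \<Rightarrow> nat list set" where
  "maxset n la = {al \<in> strong_comps n. \<forall>k<length al.
      (al ! k = 1 \<and> la (piece_start al k) = 0) \<or>
      (la (piece_start al k) \<noteq> 0 \<and> la (piece_start al k + al ! k - 1) \<noteq> 0)}"

definition open_on_cols :: "mat \<Rightarrow> nat set \<Rightarrow> bool" where
  "open_on_cols A J \<longleftrightarrow>
     (\<forall>i i' j j'. i < i' \<longrightarrow> j < j' \<longrightarrow> j \<in> J \<longrightarrow> j' \<in> J \<longrightarrow> A i j * A i' j' = 0)"

definition open_cols_wrt :: "mat \<Rightarrow> nat list \<Rightarrow> bool" where
  "open_cols_wrt A al \<longleftrightarrow>
     (\<forall>k<length al. open_on_cols A {piece_start al k ..< piece_start al k + al ! k})"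

definition B_la_al :: "nat \<Rightarrow> nat \<Rightarrow> (nat \<Rightarrow> nat) \<Rightarrow> nat list \<Rightarrow> mat set" where
  "B_la_al n r la al = {A \<in> mats n r. co n A = la \<and> open_cols_wrt A al}"

definition B_la :: "nat \<Rightarrow> nat \<Rightarrow> (nat \<Rightarrow> nat) \<Rightarrow> mat set" where
  "B_la n r la = {A \<in> mats n r. co n A = la}
      - (\<Union>al \<in> maxset n la - {replicate n 1}. B_la_al n r la al)"

definition cb :: "nat \<Rightarrow> nat \<Rightarrow> (nat \<Rightarrow> nat) \<Rightarrow> mat set" where
  "cb n r la = {A \<in> mats n r. co n A = la \<and>
      (\<forall>i j. 0 < A i j \<longrightarrow> (\<forall>i' s. i' \<le> i \<longrightarrow> j < s \<longrightarrow> A i' s = 0))}"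

definition proj :: "mat set \<Rightarrow> vect \<Rightarrow> vect" where
  "proj X v = (\<lambda>B. if B \<in> X then v B else 0)"

definition span_of :: "mat set \<Rightarrow> vect set" where
  "span_of X = {v. \<forall>B. B \<notin> X \<longrightarrow> v B = 0}"

(* P_lambda = C B^lambda, with b.e_A = e_B if e_B in B^lambda, else 0 *)
definition P_carrier :: "nat \<Rightarrow> nat \<Rightarrow> (nat \<Rightarrow> nat) \<Rightarrow> vect set" where
  "P_carrier n r la = span_of (B_la n r la)"

definition P_act :: "nat \<Rightarrow> nat \<Rightarrow> (nat \<Rightarrow> nat) \<Rightarrow> (vect \<Rightarrow> vect) \<Rightarrow> vect \<Rightarrow> vect" where
  "P_act n r la a v = proj (B_la n r la) (a v)"

definition N_carrier :: "nat \<Rightarrow> nat \<Rightarrow> (nat \<Rightarrow> nat) \<Rightarrow> vect set" where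
  "N_carrier n r la = span_of (B_la n r la - cb n r la)"

(* S_lambda = P_lambda / N_lambda, realised on the complementary basis
   B^lambda \<inter> beta^lambda of N_lambda in P_lambda (coset v + N_lambda
   represented by its unique representative in span(B^lambda \<inter> beta^lambda)) *)
definition S_carrier :: "nat \<Rightarrow> nat \<Rightarrow> (nat \<Rightarrow> nat) \<Rightarrow> vect set" where
  "S_carrier n r la = span_of (B_la n r la \<inter> cb n r la)"

definition S_act :: "nat \<Rightarrow> nat \<Rightarrow> (nat \<Rightarrow> nat) \<Rightarrow> (vect \<Rightarrow> vect) \<Rightarrow> vect \<Rightarrow> vect" where
  "S_act n r la a v = proj (B_la n r la \<inter> cb n r la) (P_act n r la a v)"

end

theory Submission
  imports Defs "HOL-Library.FuncSet" "HOL-Library.Product_Plus"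
begin


lemma sum_fun_apply: "(\<Sum>a\<in>A. f a) x = (\<Sum>a\<in>A. f a x)"
  by (induction A rule: infinite_finite_induct) auto

lemma finite_mats: "finite (mats n r)"
proof -
  let ?h = "\<lambda>A::mat. restrict (\<lambda>i. restrict (A i) {..<n}) {..<n}"
  have "?h ` mats n r \<subseteq> PiE {..<n} (\<lambda>_. PiE {..<n} (\<lambda>_. {..r}))"
  proof
    fix F assume "F \<in> ?h ` mats n r"
    then obtain A where A: "A \<in> mats n r" "F = ?h A" by auto
    have "A i j \<le> r" if "i < n" "j < n" for i j
    proof -
      have "A i j \<le> (\<Sum>j<n. A i j)" using that by (intro member_le_sum) auto
      also have "\<dots> \<le> (\<Sum>i<n. \<Sum>j<n. A i j)" using that by (intro member_le_sum) auto
      finally show ?thesis using A by (simp add: mats_def)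
    qed
    then show "F \<in> PiE {..<n} (\<lambda>_. PiE {..<n} (\<lambda>_. {..r}))" using A by (auto simp: PiE_iff)
  qed
  moreover have "inj_on ?h (mats n r)"
  proof
    fix A B assume AB: "A \<in> mats n r" "B \<in> mats n r" "?h A = ?h B"
    show "A = B"
    proof (intro ext)
      fix i j
      show "A i j = B i j"
      proof (cases "i < n \<and> j < n")
        case True
        have "?h A i j = ?h B i j" using fun_cong[OF fun_cong[OF AB(3), of i], of j] by simp
        then show ?thesis using True by simp
      next
        case False then show ?thesis using AB by (auto simp: mats_def)
      qed
    qed
  qed
  ultimately show ?thesis
    by (metis finite_PiE finite_atMost finite_lessThan finite_subset finite_imageD)
qed

lemma fscale_apply[simp]: "fscale c v B = c * v B" by (simp add: fscale_def)

lemma lin_ext_apply: "lin_ext n r g v B = (\<Sum>A\<in>mats n r. v A * g A B)"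
  by (simp add: lin_ext_def sum_fun_apply)

definition lin :: "(vect \<Rightarrow> vect) \<Rightarrow> bool" where
  "lin T \<longleftrightarrow> (\<forall>v w. T (v + w) = T v + T w) \<and> (\<forall>c v. T (fscale c v) = fscale c (T v))"

lemma lin_add: "lin T \<Longrightarrow> T (v + w) = T v + T w" by (simp add: lin_def)
lemma lin_scale: "lin T \<Longrightarrow> T (fscale c v) = fscale c (T v)" by (simp add: lin_def)
lemma lin_zero: "lin T \<Longrightarrow> T 0 = 0"
  using lin_scale[of T 0 0] by (simp add: fscale_def[abs_def] zero_fun_def)
lemma lin_sum: "lin T \<Longrightarrow> T (\<Sum>a\<in>A. f a) = (\<Sum>a\<in>A. T (f a))"
  by (induction A rule: infinite_finite_induct) (auto simp: lin_zero lin_add)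

lemma lin_lin_ext: "lin (lin_ext n r g)"
  unfolding lin_def by (auto simp: lin_ext_apply sum.distrib sum_distrib_left algebra_simps intro!: ext)

lemma lin_ext_ebas: "A \<in> mats n r \<Longrightarrow> lin_ext n r g (ebas A) = g A"
proof (rule ext)
  fix B assume A: "A \<in> mats n r"
  have "lin_ext n r g (ebas A) B = (\<Sum>A'\<in>mats n r. if A' = A then g A' B else 0)"
    by (auto simp: lin_ext_apply ebas_def intro!: sum.cong)
  also have "\<dots> = g A B" using A by (simp add: finite_mats)
  finally show "lin_ext n r g (ebas A) B = g A B" .
qed

lemma lin_ext_ebas_out: "A \<notin> mats n r \<Longrightarrow> lin_ext n r g (ebas A) = 0"
  by (rule ext) (auto simp: lin_ext_apply ebas_def intro!: sum.neutral)

lemma lin_ext_cong: "(\<And>A. A \<in> mats n r \<Longrightarrow> g A = h A) \<Longrightarrow> lin_ext n r g = lin_ext n r h"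
  by (intro ext) (simp add: lin_ext_apply)

lemma lin_comp_lin_ext: "lin T \<Longrightarrow> T \<circ> lin_ext n r g = lin_ext n r (\<lambda>A. T (g A))"
  by (intro ext) (simp add: lin_ext_def lin_sum lin_scale sum_fun_apply)

definition rep :: "nat \<Rightarrow> nat \<Rightarrow> (vect \<Rightarrow> vect) \<Rightarrow> bool" where
  "rep n r T \<longleftrightarrow> (\<exists>g. T = lin_ext n r g)"

lemma rep_self: "rep n r T \<Longrightarrow> T = lin_ext n r (\<lambda>A. T (ebas A))"
  unfolding rep_def by (auto intro!: lin_ext_cong simp: lin_ext_ebas)

lemma rep_eqI: "rep n r T1 \<Longrightarrow> rep n r T2 \<Longrightarrow> (\<And>A. A \<in> mats n r \<Longrightarrow> T1 (ebas A) = T2 (ebas A)) \<Longrightarrow> T1 = T2"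
  by (metis rep_self lin_ext_cong)

lemma rep_lin: "rep n r T \<Longrightarrow> lin T" by (auto simp: rep_def lin_lin_ext)

lemma rep_comp: "lin T1 \<Longrightarrow> rep n r T2 \<Longrightarrow> rep n r (T1 \<circ> T2)"
  unfolding rep_def by (auto simp: lin_comp_lin_ext)

lemma rep_add: assumes "rep n r T1" "rep n r T2" shows "rep n r (T1 + T2)"
proof -
  obtain g1 g2 where g: "T1 = lin_ext n r g1" "T2 = lin_ext n r g2" using assms rep_def by blast
  have "T1 + T2 = lin_ext n r (\<lambda>A. g1 A + g2 A)"
    by (intro ext) (simp add: g lin_ext_apply sum.distrib algebra_simps)
  then show ?thesis by (auto simp: rep_def)
qed

lemma rep_smult: assumes "rep n r T" shows "rep n r (\<lambda>v. fscale c (T v))"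
proof -
  obtain g where g: "T = lin_ext n r g" using assms rep_def by blast
  have "(\<lambda>v. fscale c (T v)) = lin_ext n r (\<lambda>A. fscale c (g A))"
    by (intro ext) (simp add: g lin_ext_apply sum_distrib_left algebra_simps)
  then show ?thesis by (auto simp: rep_def)
qed

lemma rep_zero: "rep n r 0"
  unfolding rep_def by (auto intro!: exI[of _ "\<lambda>A. 0"] ext simp: lin_ext_apply)

lemma rep_K: "rep n r (K_op n r la)" by (auto simp: rep_def K_op_def)
lemma rep_E: "rep n r (E_op n r i)" by (auto simp: rep_def E_op_def)
lemma rep_F: "rep n r (F_op n r i)" by (auto simp: rep_def F_op_def)

lemma S0_rep: "a \<in> S0 n r \<Longrightarrow> rep n r a"
proof (induction rule: S0.induct)
  case zero then show ?case by (rule rep_zero)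
next
  case (gen_k la) show ?case by (rule rep_K)
next
  case (gen_e i) show ?case by (rule rep_E)
next
  case (gen_f i) show ?case by (rule rep_F)
next
  case (add a b) show ?case using add.IH(1) add.IH(2) by (rule rep_add)
next
  case (smult a c) show ?case using smult.IH by (rule rep_smult)
next
  case (mult a b) show ?case using rep_lin[OF mult.IH(1)] mult.IH(2) by (rule rep_comp)
qed

lemma S0_lin: "a \<in> S0 n r \<Longrightarrow> lin a" using S0_rep rep_lin by blast


definition mv :: "mat \<Rightarrow> nat \<Rightarrow> nat \<Rightarrow> nat \<Rightarrow> mat" where
  "mv A a b c = (\<lambda>k l. if l = b \<and> k = c then Suc (A k l) else if l = b \<and> k = a then A k l - 1 else A k l)"

definition gpos :: "mat \<Rightarrow> nat \<Rightarrow> nat" where "gpos A k = (GREATEST j. 0 < A k j)"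
definition lpos :: "mat \<Rightarrow> nat \<Rightarrow> nat" where "lpos A k = (LEAST j. 0 < A k j)"

definition Emv :: "mat \<Rightarrow> nat \<Rightarrow> mat" where "Emv A i = mv A (Suc i) (gpos A (Suc i)) i"
definition Fmv :: "mat \<Rightarrow> nat \<Rightarrow> mat" where "Fmv A i = mv A i (lpos A i) (Suc i)"

definition Fsh :: "(nat \<Rightarrow> nat) \<Rightarrow> nat \<Rightarrow> nat \<Rightarrow> nat" where
  "Fsh la i = la(i := la i - 1, Suc i := la (Suc i) + 1)"
definition Esh :: "(nat \<Rightarrow> nat) \<Rightarrow> nat \<Rightarrow> nat \<Rightarrow> nat" where
  "Esh la i = la(i := la i + 1, Suc i := la (Suc i) - 1)"

lemma mats_zero: "A \<in> mats n r \<Longrightarrow> n \<le> i \<or> n \<le> j \<Longrightarrow> A i j = 0"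
  by (auto simp: mats_def)

lemma mats_pos_lt: "A \<in> mats n r \<Longrightarrow> 0 < A i j \<Longrightarrow> i < n \<and> j < n"
  using mats_zero by (metis less_irrefl not_le)

lemma ro_pos: assumes "A \<in> mats n r" shows "(0 < ro n A k) \<longleftrightarrow> (\<exists>j. 0 < A k j)"
proof
  assume "0 < ro n A k"
  then show "\<exists>j. 0 < A k j" unfolding ro_def by (metis gr0I sum.neutral less_irrefl)
next
  assume "\<exists>j. 0 < A k j"
  then obtain j where j: "0 < A k j" by blast
  then have "j < n" using mats_pos_lt[OF assms] by blast
  then have "A k j \<le> ro n A k" unfolding ro_def by (intro member_le_sum) auto
  then show "0 < ro n A k" using j by simp
qed

lemma co_pos: assumes "A \<in> mats n r" shows "(0 < co n A k) \<longleftrightarrow> (\<exists>i. 0 < A i k)"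
proof
  assume "0 < co n A k"
  then show "\<exists>i. 0 < A i k" unfolding co_def by (metis gr0I sum.neutral less_irrefl)
next
  assume "\<exists>i. 0 < A i k"
  then obtain i where i: "0 < A i k" by blast
  then have "i < n" using mats_pos_lt[OF assms] by blast
  then have "A i k \<le> co n A k" unfolding co_def by (intro member_le_sum) auto
  then show "0 < co n A k" using i by simp
qed

lemma gpos_props:
  assumes "A \<in> mats n r" "0 < A k j0"
  shows "0 < A k (gpos A k)" "gpos A k < n" "\<And>j. 0 < A k j \<Longrightarrow> j \<le> gpos A k"
proof -
  have b: "\<forall>y. 0 < A k y \<longrightarrow> y \<le> n" using mats_pos_lt[OF assms(1)] by (meson less_imp_le)
  show "0 < A k (gpos A k)" unfolding gpos_def by (rule GreatestI_nat[of "\<lambda>j. 0 < A k j" j0 n, OF assms(2)]) (use b in auto)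
  then show "gpos A k < n" using mats_pos_lt[OF assms(1)] by blast
  show "\<And>j. 0 < A k j \<Longrightarrow> j \<le> gpos A k" unfolding gpos_def by (rule Greatest_le_nat[of "\<lambda>j. 0 < A k j" _ n]) (use b in auto)
qed

lemma gpos_eq: "0 < A k p \<Longrightarrow> (\<And>j. 0 < A k j \<Longrightarrow> j \<le> p) \<Longrightarrow> gpos A k = p"
  unfolding gpos_def by (rule Greatest_equality) auto

lemma lpos_props:
  assumes "0 < A k j0"
  shows "0 < A k (lpos A k)" "\<And>j. 0 < A k j \<Longrightarrow> lpos A k \<le> j"
  unfolding lpos_def by (rule LeastI[of "\<lambda>j. 0 < A k j", OF assms]) (rule Least_le)

lemma lpos_eq: "0 < A k p \<Longrightarrow> (\<And>j. 0 < A k j \<Longrightarrow> p \<le> j) \<Longrightarrow> lpos A k = p"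
  unfolding lpos_def by (rule Least_equality) auto

lemma sum_upd: fixes f :: "nat \<Rightarrow> nat" shows "b < n \<Longrightarrow> (\<Sum>l<n. (f(b := v)) l) + f b = (\<Sum>l<n. f l) + v"
proof -
  assume b: "b < n"
  have "(\<Sum>l<n. (f(b := v)) l) = v + (\<Sum>l\<in>{..<n}-{b}. f l)"
    using b by (subst sum.remove[of "{..<n}" b]) auto
  moreover have "(\<Sum>l<n. f l) = f b + (\<Sum>l\<in>{..<n}-{b}. f l)"
    using b by (subst sum.remove[of "{..<n}" b]) auto
  ultimately show ?thesis by simp
qed

lemma mv_row_c: "a \<noteq> c \<Longrightarrow> mv A a b c c = (A c)(b := Suc (A c b))"
  by (auto simp: mv_def)
lemma mv_row_a: "a \<noteq> c \<Longrightarrow> mv A a b c a = (A a)(b := A a b - 1)"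
  by (auto simp: mv_def)
lemma mv_row_o: "k \<noteq> a \<Longrightarrow> k \<noteq> c \<Longrightarrow> mv A a b c k = A k"
  by (auto simp: mv_def)

lemma ro_mv:
  assumes "a \<noteq> c" "b < n" "0 < A a b"
  shows "ro n (mv A a b c) = (ro n A)(a := ro n A a - 1, c := ro n A c + 1)"
proof
  fix k
  show "ro n (mv A a b c) k = ((ro n A)(a := ro n A a - 1, c := ro n A c + 1)) k"
  proof (cases "k = c")
    case True
    then show ?thesis using sum_upd[OF assms(2), of "A c" "Suc (A c b)"] assms
      by (simp add: ro_def mv_row_c)
  next
    case False
    show ?thesis
    proof (cases "k = a")
      case True
      have "(\<Sum>l<n. A a l) \<ge> A a b" using assms by (intro member_le_sum) auto
      then show ?thesis using sum_upd[OF assms(2), of "A a" "A a b - 1"] assms True False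
        by (simp add: ro_def mv_row_a)
    next
      case False2: False
      then show ?thesis using False by (simp add: ro_def mv_row_o)
    qed
  qed
qed

lemma co_mv:
  assumes "a \<noteq> c" "a < n" "c < n" "0 < A a b"
  shows "co n (mv A a b c) = co n A"
proof
  fix l
  show "co n (mv A a b c) l = co n A l"
  proof (cases "l = b")
    case False
    then show ?thesis by (simp add: co_def mv_def)
  next
    case True
    let ?g = "(\<lambda>k. A k b)(a := A a b - 1)"
    have 1: "(\<lambda>k. mv A a b c k b) = ?g(c := Suc (A c b))"
      using assms by (auto simp: mv_def)
    have "(\<Sum>k<n. (?g(c := Suc (A c b))) k) + ?g c = (\<Sum>k<n. ?g k) + Suc (A c b)"
      by (rule sum_upd[OF assms(3)])
    moreover have "(\<Sum>k<n. ?g k) + A a b = (\<Sum>k<n. A k b) + (A a b - 1)"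
      using sum_upd[OF assms(2), of "\<lambda>k. A k b" "A a b - 1"] by simp
    moreover have "(\<Sum>k<n. mv A a b c k b) = (\<Sum>k<n. (?g(c := Suc (A c b))) k)"
      by (rule sum.cong[OF refl]) (metis 1)
    ultimately show ?thesis using True assms by (simp add: co_def)
  qed
qed

lemma mats_sum_ro: "(\<Sum>i<n. \<Sum>j<n. A i j) = (\<Sum>i<n. ro n A i)" by (simp add: ro_def)

lemma mv_mats:
  assumes A: "A \<in> mats n r" and "a \<noteq> c" "a < n" "c < n" "0 < A a b"
  shows "mv A a b c \<in> mats n r"
proof -
  have b: "b < n" using mats_pos_lt[OF A assms(5)] by simp
  have z: "mv A a b c i j = 0" if "n \<le> i \<or> n \<le> j" for i j
    using that assms b mats_zero[OF A] by (auto simp: mv_def)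
  have ro: "ro n (mv A a b c) = (ro n A)(a := ro n A a - 1, c := ro n A c + 1)"
    by (rule ro_mv) (use assms b in auto)
  have pa: "ro n A a \<ge> 1"
  proof -
    have "A a b \<le> ro n A a" unfolding ro_def using b by (intro member_le_sum) auto
    then show ?thesis using assms by simp
  qed
  let ?f = "(ro n A)(a := ro n A a - 1)"
  have "(\<Sum>i<n. ro n (mv A a b c) i) + ?f c = (\<Sum>i<n. ?f i) + (ro n A c + 1)"
    unfolding ro by (rule sum_upd[OF assms(4)])
  moreover have "(\<Sum>i<n. ?f i) + ro n A a = (\<Sum>i<n. ro n A i) + (ro n A a - 1)"
    by (rule sum_upd[OF assms(3)])
  ultimately have "(\<Sum>i<n. ro n (mv A a b c) i) = (\<Sum>i<n. ro n A i)"
    using assms pa by simp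
  then show ?thesis using A z by (simp add: mats_def ro_def)
qed

lemma mm_mv1: "mminus (mplus A i p) (Suc i) p = mv A (Suc i) p i"
  by (auto simp: fun_eq_iff mminus_def mplus_def mv_def)
lemma mm_mv2: "mplus (mminus A i q) (Suc i) q = mv A i q (Suc i)"
  by (auto simp: fun_eq_iff mminus_def mplus_def mv_def)

lemma K_ebas: "A \<in> mats n r \<Longrightarrow> K_op n r la (ebas A) = (if ro n A = la then ebas A else 0)"
  by (simp add: K_op_def lin_ext_ebas)
lemma E_ebas: "A \<in> mats n r \<Longrightarrow> E_op n r i (ebas A) = (if 0 < ro n A (Suc i) then ebas (Emv A i) else 0)"
  by (simp add: E_op_def lin_ext_ebas Emv_def gpos_def mm_mv1 Let_def zero_fun_def)
lemma F_ebas: "A \<in> mats n r \<Longrightarrow> F_op n r i (ebas A) = (if 0 < ro n A i then ebas (Fmv A i) else 0)"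
  by (simp add: F_op_def lin_ext_ebas Fmv_def lpos_def mm_mv2 Let_def zero_fun_def)

lemma Emv_mats: "A \<in> mats n r \<Longrightarrow> Suc i < n \<Longrightarrow> 0 < ro n A (Suc i) \<Longrightarrow> Emv A i \<in> mats n r"
  unfolding Emv_def using gpos_props by (intro mv_mats) (auto simp: ro_pos)
lemma Fmv_mats: "A \<in> mats n r \<Longrightarrow> Suc i < n \<Longrightarrow> 0 < ro n A i \<Longrightarrow> Fmv A i \<in> mats n r"
  unfolding Fmv_def using lpos_props by (intro mv_mats) (auto simp: ro_pos)

lemma lpos_lt: "A \<in> mats n r \<Longrightarrow> 0 < ro n A i \<Longrightarrow> lpos A i < n"
  using lpos_props(1) mats_pos_lt by (metis ro_pos)

lemma ro_Emv: "A \<in> mats n r \<Longrightarrow> Suc i < n \<Longrightarrow> 0 < ro n A (Suc i) \<Longrightarrow> ro n (Emv A i) = Esh (ro n A) i"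
  unfolding Emv_def Esh_def using gpos_props
  by (subst ro_mv) (auto simp: ro_pos fun_upd_twist)
lemma ro_Fmv: "A \<in> mats n r \<Longrightarrow> Suc i < n \<Longrightarrow> 0 < ro n A i \<Longrightarrow> ro n (Fmv A i) = Fsh (ro n A) i"
  unfolding Fmv_def Fsh_def using lpos_props lpos_lt
  by (subst ro_mv) (auto simp: ro_pos)
lemma co_Emv: "A \<in> mats n r \<Longrightarrow> Suc i < n \<Longrightarrow> 0 < ro n A (Suc i) \<Longrightarrow> co n (Emv A i) = co n A"
  unfolding Emv_def using gpos_props by (subst co_mv) (auto simp: ro_pos)
lemma co_Fmv: "A \<in> mats n r \<Longrightarrow> Suc i < n \<Longrightarrow> 0 < ro n A i \<Longrightarrow> co n (Fmv A i) = co n A"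
  unfolding Fmv_def using lpos_props by (subst co_mv) (auto simp: ro_pos)


lemma mv_back: "0 < A a b \<Longrightarrow> a \<noteq> c \<Longrightarrow> mv (mv A a b c) c b a = A"
  by (auto simp: mv_def fun_eq_iff)

lemma mv_comm:
  assumes "a \<noteq> c" "a' \<noteq> c'" "0 < A a b" "0 < mv A a b c a' b'" "0 < A a' b'" "0 < mv A a' b' c' a b"
  shows "mv (mv A a b c) a' b' c' = mv (mv A a' b' c') a b c"
  using assms unfolding mv_def fun_eq_iff by auto

lemma gpos_same: "k \<noteq> a \<Longrightarrow> k \<noteq> c \<Longrightarrow> gpos (mv A a b c) k = gpos A k"
  by (simp add: gpos_def mv_row_o)
lemma lpos_same: "k \<noteq> a \<Longrightarrow> k \<noteq> c \<Longrightarrow> lpos (mv A a b c) k = lpos A k"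
  by (simp add: lpos_def mv_row_o)


lemma gpos_lose:
  assumes A: "A \<in> mats n r" and "a \<noteq> c" "0 < mv A a b c a (gpos A a)"
  shows "gpos (mv A a b c) a = gpos A a"
proof (rule gpos_eq)
  show "0 < mv A a b c a (gpos A a)" by fact
  have pos: "0 < A a (gpos A a)" using assms by (auto simp: mv_def split: if_splits)
  fix j assume "0 < mv A a b c a j"
  then have "0 < A a j" using assms by (auto simp: mv_def split: if_splits)
  then show "j \<le> gpos A a" using gpos_props(3)[OF A] by blast
qed

lemma lpos_lose:
  assumes "a \<noteq> c" "0 < mv A a b c a (lpos A a)"
  shows "lpos (mv A a b c) a = lpos A a"
proof (rule lpos_eq)
  show "0 < mv A a b c a (lpos A a)" by fact
  fix j assume "0 < mv A a b c a j"
  then have "0 < A a j" using assms by (auto simp: mv_def split: if_splits)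
  then show "lpos A a \<le> j" using lpos_props(2) by blast
qed

lemma mv_c_entry: "a \<noteq> c \<Longrightarrow> mv A a b c c j = (if j = b then Suc (A c j) else A c j)"
  by (simp add: mv_def)

lemma gpos_gain:
  assumes A: "A \<in> mats n r" and ac: "a \<noteq> c"
  shows "gpos (mv A a b c) c = (if \<exists>j. 0 < A c j then max (gpos A c) b else b)"
proof (cases "\<exists>j. 0 < A c j")
  case True
  then obtain j0 where j0: "0 < A c j0" by blast
  note gp = gpos_props[OF A j0]
  have "gpos (mv A a b c) c = max (gpos A c) b"
  proof (rule gpos_eq)
    show "0 < mv A a b c c (max (gpos A c) b)"
      using gp(1) by (simp add: mv_c_entry[OF ac] max_def)
    fix j assume "0 < mv A a b c c j"
    then have "j = b \<or> 0 < A c j" by (auto simp: mv_c_entry[OF ac] split: if_splits)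
    then show "j \<le> max (gpos A c) b" using gp(3) by (metis max.coboundedI1 max.cobounded2)
  qed
  then show ?thesis using True by simp
next
  case False
  have "gpos (mv A a b c) c = b"
  proof (rule gpos_eq)
    show "0 < mv A a b c c b" by (simp add: mv_c_entry[OF ac])
    fix j assume "0 < mv A a b c c j"
    then show "j \<le> b" using False by (auto simp: mv_c_entry[OF ac] split: if_splits)
  qed
  then show ?thesis using False by simp
qed

lemma lpos_gain:
  assumes ac: "a \<noteq> c"
  shows "lpos (mv A a b c) c = (if \<exists>j. 0 < A c j then min (lpos A c) b else b)"
proof (cases "\<exists>j. 0 < A c j")
  case True
  then obtain j0 where j0: "0 < A c j0" by blast
  note lp = lpos_props[of A c j0, OF j0]
  have "lpos (mv A a b c) c = min (lpos A c) b"
  proof (rule lpos_eq)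
    show "0 < mv A a b c c (min (lpos A c) b)"
      using lp(1) by (simp add: mv_c_entry[OF ac] min_def)
    fix j assume "0 < mv A a b c c j"
    then have "j = b \<or> 0 < A c j" by (auto simp: mv_c_entry[OF ac] split: if_splits)
    then show "min (lpos A c) b \<le> j" using lp(2) by (metis min.coboundedI1 min.cobounded2)
  qed
  then show ?thesis using True by simp
next
  case False
  have "lpos (mv A a b c) c = b"
  proof (rule lpos_eq)
    show "0 < mv A a b c c b" by (simp add: mv_c_entry[OF ac])
    fix j assume "0 < mv A a b c c j"
    then show "b \<le> j" using False by (auto simp: mv_c_entry[OF ac] split: if_splits)
  qed
  then show ?thesis using False by simp
qed

lemma row_single:
  assumes A: "A \<in> mats n r" and j0: "0 < A k j0" and eq: "lpos A k = gpos A k"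
  shows "ro n A k = A k (gpos A k)"
proof -
  define p where "p = gpos A k"
  have p: "p < n" using gpos_props(2)[OF A j0] p_def by simp
  have z: "A k l = 0" if "l \<noteq> p" for l
  proof (rule ccontr)
    assume "A k l \<noteq> 0"
    then have pos: "0 < A k l" by simp
    have "lpos A k \<le> l" using lpos_props(2)[of A k j0, OF j0 pos] .
    moreover have "l \<le> p" using gpos_props(3)[OF A j0 pos] p_def by simp
    ultimately show False using eq that p_def by simp
  qed
  have "ro n A k = (\<Sum>l<n. if l = p then A k p else 0)"
    unfolding ro_def by (rule sum.cong[OF refl]) (use z in auto)
  also have "\<dots> = A k p" using p by simp
  finally show ?thesis using p_def by simp
qed


lemma lin_K: "lin (K_op n r la)" by (rule rep_lin[OF rep_K])
lemma lin_E: "lin (E_op n r i)" by (rule rep_lin[OF rep_E])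
lemma lin_F: "lin (F_op n r i)" by (rule rep_lin[OF rep_F])
lemma K0[simp]: "K_op n r la 0 = 0" by (rule lin_zero[OF lin_K])
lemma E0[simp]: "E_op n r i 0 = 0" by (rule lin_zero[OF lin_E])
lemma F0[simp]: "F_op n r i 0 = 0" by (rule lin_zero[OF lin_F])

lemma rep_comp2: "rep n r T2 \<Longrightarrow> rep n r (K_op n r la \<circ> T2)" "rep n r T2 \<Longrightarrow> rep n r (E_op n r i \<circ> T2)"
  "rep n r T2 \<Longrightarrow> rep n r (F_op n r i \<circ> T2)"
  by (auto intro: rep_comp lin_K lin_E lin_F)

lemma lin_comp: "lin T1 \<Longrightarrow> lin T2 \<Longrightarrow> lin (T1 \<circ> T2)"
  by (simp add: lin_def)

lemmas rep_ops = rep_K rep_E rep_F rep_comp2 rep_zero rep_comp lin_comp lin_K lin_E lin_F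

lemma O1: "K_op n r mu \<circ> K_op n r la = (if mu = la then K_op n r la else 0)"
  by (rule rep_eqI) (auto intro!: rep_ops simp: K_ebas)

lemma O2: assumes "Suc i < n"
  shows "K_op n r mu \<circ> F_op n r i \<circ> K_op n r la = (if mu = Fsh la i then F_op n r i \<circ> K_op n r la else 0)"
  by (rule rep_eqI) (use assms in \<open>auto intro!: rep_ops simp: K_ebas F_ebas Fmv_mats ro_Fmv\<close>)

lemma O3: assumes "Suc i < n"
  shows "K_op n r mu \<circ> E_op n r i \<circ> K_op n r la = (if mu = Esh la i then E_op n r i \<circ> K_op n r la else 0)"
  by (rule rep_eqI) (use assms in \<open>auto intro!: rep_ops simp: K_ebas E_ebas Emv_mats ro_Emv\<close>)

lemma O6a: "la (Suc i) = 0 \<Longrightarrow> E_op n r i \<circ> K_op n r la = 0"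
  by (rule rep_eqI) (auto intro!: rep_ops simp: K_ebas E_ebas)

lemma O6b: "la i = 0 \<Longrightarrow> F_op n r i \<circ> K_op n r la = 0"
  by (rule rep_eqI) (auto intro!: rep_ops simp: K_ebas F_ebas)


lemma EF_basis:
  assumes A: "A \<in> mats n r" and i: "Suc i < n" and j: "Suc j < n" and ij: "i \<noteq> j"
  shows "E_op n r i (F_op n r j (ebas A)) = F_op n r j (E_op n r i (ebas A))"
proof (cases "j = Suc i")
  case True
  note jj = True
  consider "ro n A j = 0" | "ro n A j = 1" | "ro n A j \<ge> 2" by linarith
  then show ?thesis
  proof cases
    case 1 then show ?thesis using A jj by (simp add: F_ebas E_ebas)
  next
    case 2
    have "ro n (Fmv A j) (Suc i) = 0" using 2 A jj j by (simp add: ro_Fmv Fsh_def)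
    moreover have "ro n (Emv A i) j = 0" using 2 A jj j by (simp add: ro_Emv Esh_def)
    ultimately show ?thesis using A jj 2 i j
      by (simp add: F_ebas E_ebas Fmv_mats Emv_mats)
  next
    case 3
    have rpos: "0 < ro n A (Suc i)" using 3 jj by simp
    then obtain j0 where j0: "0 < A (Suc i) j0" using ro_pos[OF A] by blast
    define p where "p = gpos A (Suc i)"
    define q where "q = lpos A (Suc i)"
    have pp: "0 < A (Suc i) p" using gpos_props(1)[OF A j0] p_def by simp
    have qp: "0 < A (Suc i) q" using lpos_props(1)[of A "Suc i" j0, OF j0] q_def by simp
    have s1: "0 < mv A (Suc i) q (Suc (Suc i)) (Suc i) p"
    proof (cases "p = q")
      case False then show ?thesis using pp by (simp add: mv_def)
    next
      case True
      have "ro n A (Suc i) = A (Suc i) p"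
        using row_single[OF A j0] True p_def q_def by simp
      then show ?thesis using 3 jj True by (simp add: mv_def)
    qed
    have s2: "0 < mv A (Suc i) p i (Suc i) q"
    proof (cases "p = q")
      case False then show ?thesis using qp by (simp add: mv_def)
    next
      case True
      have "ro n A (Suc i) = A (Suc i) p"
        using row_single[OF A j0] True p_def q_def by simp
      then show ?thesis using 3 jj True by (simp add: mv_def)
    qed
    have B: "Fmv A j = mv A (Suc i) q (Suc (Suc i))" using jj q_def by (simp add: Fmv_def)
    have C: "Emv A i = mv A (Suc i) p i" using p_def by (simp add: Emv_def)
    have gB: "gpos (Fmv A j) (Suc i) = p"
      unfolding B p_def by (rule gpos_lose[OF A]) (use s1 p_def in auto)
    have lC: "lpos (Emv A i) j = q"
      unfolding C jj q_def by (rule lpos_lose) (use s2 q_def in auto)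
    have eq: "Emv (Fmv A j) i = Fmv (Emv A i) j"
      unfolding Emv_def[of "Fmv A j"] Fmv_def[of "Emv A i"] gB lC
      unfolding B C unfolding jj by (rule mv_comm) (use pp qp s1 s2 in auto)
    have r1: "0 < ro n (Fmv A j) (Suc i)" using 3 A jj j by (simp add: ro_Fmv Fsh_def)
    have r2: "0 < ro n (Emv A i) j" using 3 A jj j i by (simp add: ro_Emv Esh_def)
    show ?thesis using A jj 3 i j r1 r2 eq
      by (simp add: F_ebas E_ebas Fmv_mats Emv_mats)
  qed
next
  case False
  note jj = False
  show ?thesis
  proof (cases "0 < ro n A j \<and> 0 < ro n A (Suc i)")
    case False
    have a1: "0 < ro n A j \<Longrightarrow> ro n (Fmv A j) (Suc i) = ro n A (Suc i)"
      using A j jj ij by (simp add: ro_Fmv Fsh_def)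
    have a2: "0 < ro n A (Suc i) \<Longrightarrow> ro n (Emv A i) j = ro n A j"
      using A i jj ij by (simp add: ro_Emv Esh_def)
    show ?thesis using False A i j a1 a2 by (auto simp: F_ebas E_ebas Fmv_mats Emv_mats)
  next
    case True
    have a1: "ro n (Fmv A j) (Suc i) = ro n A (Suc i)"
      using A j jj ij True by (simp add: ro_Fmv Fsh_def)
    have a2: "ro n (Emv A i) j = ro n A j"
      using A i jj ij True by (simp add: ro_Emv Esh_def)
    obtain j0 where j0: "0 < A (Suc i) j0" using True ro_pos[OF A] by blast
    obtain j1 where j1: "0 < A j j1" using True ro_pos[OF A] by blast
    define p where "p = gpos A (Suc i)"
    define q where "q = lpos A j"
    have pp: "0 < A (Suc i) p" using gpos_props(1)[OF A j0] p_def by simp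
    have qp: "0 < A j q" using lpos_props(1)[of A j j1, OF j1] q_def by simp
    have gB: "gpos (Fmv A j) (Suc i) = p" unfolding Fmv_def p_def
      by (rule gpos_same) (use jj ij in auto)
    have lC: "lpos (Emv A i) j = q" unfolding Emv_def q_def
      by (rule lpos_same) (use jj ij in auto)
    have eq: "Emv (Fmv A j) i = Fmv (Emv A i) j"
      unfolding Emv_def[of "Fmv A j"] Fmv_def[of "Emv A i"] gB lC
      unfolding Fmv_def Emv_def p_def[symmetric] q_def[symmetric]
      by (rule mv_comm) (use pp qp jj ij in \<open>auto simp: mv_def\<close>)
    show ?thesis using A True i j a1 a2 eq
      by (simp add: F_ebas E_ebas Fmv_mats Emv_mats)
  qed
qed

lemma O4: assumes "Suc i < n" "Suc j < n" "i \<noteq> j"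
  shows "E_op n r i \<circ> F_op n r j = F_op n r j \<circ> E_op n r i"
  by (rule rep_eqI) (use assms EF_basis in \<open>auto intro!: rep_ops\<close>)

definition cc :: "(nat \<Rightarrow> nat) \<Rightarrow> nat \<Rightarrow> complex" where
  "cc la i = (if 0 < la i \<and> la (Suc i) = 0 then 1 else if la i = 0 \<and> 0 < la (Suc i) then -1 else 0)"

lemma fscale_0[simp]: "fscale c 0 = 0" by (simp add: fscale_def zero_fun_def)
lemma fscale_0c[simp]: "fscale 0 v = 0" by (simp add: fscale_def zero_fun_def)
lemma fscale_1[simp]: "fscale 1 v = v" by (simp add: fscale_def)

lemma EF_same:
  assumes A: "A \<in> mats n r" and i: "Suc i < n"
  shows "E_op n r i (F_op n r i (ebas A)) = F_op n r i (E_op n r i (ebas A)) + fscale (cc (ro n A) i) (ebas A)"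
proof -
  have ne: "i \<noteq> Suc i" by simp
  consider (a) "0 < ro n A i" "0 < ro n A (Suc i)" | (b) "0 < ro n A i" "ro n A (Suc i) = 0"
    | (c) "ro n A i = 0" "0 < ro n A (Suc i)" | (d) "ro n A i = 0" "ro n A (Suc i) = 0" by linarith
  then show ?thesis
  proof cases
    case a
    have c0: "cc (ro n A) i = 0" using a by (simp add: cc_def)
    obtain j0 where j0: "0 < A (Suc i) j0" using a ro_pos[OF A] by blast
    obtain j1 where j1: "0 < A i j1" using a ro_pos[OF A] by blast
    define p where "p = gpos A (Suc i)"
    define q where "q = lpos A i"
    have pp: "0 < A (Suc i) p" using gpos_props(1)[OF A j0] p_def by simp
    have qp: "0 < A i q" using lpos_props(1)[of A i j1, OF j1] q_def by simp
    have B: "Fmv A i = mv A i q (Suc i)" using q_def by (simp add: Fmv_def)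
    have C: "Emv A i = mv A (Suc i) p i" using p_def by (simp add: Emv_def)
    have gB: "gpos (Fmv A i) (Suc i) = max p q"
      unfolding B using gpos_gain[OF A, of i "Suc i" q] j0 p_def by auto
    have lC: "lpos (Emv A i) i = min q p"
      unfolding C using lpos_gain[of "Suc i" i A p] j1 q_def by auto
    have eq: "Emv (Fmv A i) i = Fmv (Emv A i) i"
    proof (cases "q \<le> p")
      case True
      then show ?thesis
        unfolding Emv_def[of "Fmv A i"] Fmv_def[of "Emv A i"] gB lC
        unfolding B C using True
        by (simp add: max_def min_def, intro mv_comm) (use pp qp in \<open>auto simp: mv_def\<close>)
    next
      case False
      then show ?thesis
        unfolding Emv_def[of "Fmv A i"] Fmv_def[of "Emv A i"] gB lC
        unfolding B C using False pp qp by (simp add: max_def min_def mv_back)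
    qed
    have r1: "0 < ro n (Fmv A i) (Suc i)" using a A i by (simp add: ro_Fmv Fsh_def)
    have r2: "0 < ro n (Emv A i) i" using a A i by (simp add: ro_Emv Esh_def)
    show ?thesis using A a i r1 r2 eq c0
      by (simp add: F_ebas E_ebas Fmv_mats Emv_mats)
  next
    case b
    have c1: "cc (ro n A) i = 1" using b by (simp add: cc_def)
    obtain j1 where j1: "0 < A i j1" using b ro_pos[OF A] by blast
    have emp: "\<not> (\<exists>j. 0 < A (Suc i) j)" using b ro_pos[OF A, of "Suc i"] by auto
    define q where "q = lpos A i"
    have qp: "0 < A i q" using lpos_props(1)[of A i j1, OF j1] q_def by simp
    have B: "Fmv A i = mv A i q (Suc i)" using q_def by (simp add: Fmv_def)
    have gB: "gpos (Fmv A i) (Suc i) = q"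
      unfolding B using gpos_gain[OF A, of i "Suc i" q] emp by auto
    have eq: "Emv (Fmv A i) i = A"
      unfolding Emv_def[of "Fmv A i"] gB unfolding B using qp by (simp add: mv_back)
    have r1: "0 < ro n (Fmv A i) (Suc i)" using b A i by (simp add: ro_Fmv Fsh_def)
    show ?thesis using A b i r1 eq c1
      by (simp add: F_ebas E_ebas Fmv_mats Emv_mats)
  next
    case c
    have c1: "cc (ro n A) i = -1" using c by (simp add: cc_def)
    obtain j0 where j0: "0 < A (Suc i) j0" using c ro_pos[OF A] by blast
    have emp: "\<not> (\<exists>j. 0 < A i j)" using c ro_pos[OF A, of i] by auto
    define p where "p = gpos A (Suc i)"
    have pp: "0 < A (Suc i) p" using gpos_props(1)[OF A j0] p_def by simp
    have C: "Emv A i = mv A (Suc i) p i" using p_def by (simp add: Emv_def)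
    have lC: "lpos (Emv A i) i = p"
      unfolding C using lpos_gain[of "Suc i" i A p] emp by auto
    have eq: "Fmv (Emv A i) i = A"
      unfolding Fmv_def[of "Emv A i"] lC unfolding C using pp by (simp add: mv_back)
    have r2: "0 < ro n (Emv A i) i" using c A i by (simp add: ro_Emv Esh_def)
    have neg: "ebas A + fscale (-1) (ebas A) = 0" by (simp add: fun_eq_iff fscale_def)
    show ?thesis using A c i r2 c1
      by (simp add: F_ebas E_ebas Fmv_mats Emv_mats eq neg)
  next
    case d
    then show ?thesis using A by (simp add: F_ebas E_ebas cc_def)
  qed
qed

lemma O5: assumes "Suc i < n"
  shows "E_op n r i \<circ> F_op n r i \<circ> K_op n r la
     = (F_op n r i \<circ> E_op n r i \<circ> K_op n r la) + (\<lambda>v. fscale (cc la i) (K_op n r la v))"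
  by (rule rep_eqI) (use assms EF_same in \<open>auto intro!: rep_ops rep_add rep_smult simp: K_ebas\<close>)

lemma O7: assumes "Suc i < n" "la i = 0" "0 < la (Suc i)"
  shows "F_op n r i \<circ> E_op n r i \<circ> K_op n r la = K_op n r la"
proof -
  have "E_op n r i \<circ> F_op n r i \<circ> K_op n r la = E_op n r i \<circ> (F_op n r i \<circ> K_op n r la)"
    by (simp add: comp_assoc)
  also have "\<dots> = 0"
  proof -
    have FK: "F_op n r i \<circ> K_op n r la = 0" using O6b[of la i n r] assms by simp
    show ?thesis unfolding FK by (rule ext) simp
  qed
  finally have "0 = (F_op n r i \<circ> E_op n r i \<circ> K_op n r la) + (\<lambda>v. fscale (-1) (K_op n r la v))"
    using O5[OF assms(1), of r la] assms by (simp add: cc_def)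
  then show ?thesis by (simp add: fun_eq_iff fscale_def)
qed


lemma S0_sum: "finite A \<Longrightarrow> (\<And>i. i \<in> A \<Longrightarrow> f i \<in> S0 n r) \<Longrightarrow> (\<Sum>i\<in>A. f i) \<in> S0 n r"
proof (induction A rule: finite_induct)
  case empty show ?case by (simp only: sum.empty) (rule S0.zero)
next
  case (insert j B)
  have "f j + (\<Sum>i\<in>B. f i) \<in> S0 n r" using insert by (intro S0.add) auto
  then show ?case by (simp only: sum.insert[OF insert(1,2)])
qed

context
  fixes n r :: nat and sm :: "complex \<Rightarrow> 'm::ab_group_add \<Rightarrow> 'm" and M :: "'m set"
    and act :: "(vect \<Rightarrow> vect) \<Rightarrow> 'm \<Rightarrow> 'm"
  assumes MOD: "is_module n r sm M act"
begin

lemma m_vs: "vector_space sm" using MOD by (simp add: is_module_def)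
lemma m_mod: "module sm" using m_vs by (simp add: module_iff_vector_space)
lemma m_sub: "module.subspace sm M" using MOD by (simp add: is_module_def)
lemma m_closed: "a \<in> S0 n r \<Longrightarrow> x \<in> M \<Longrightarrow> act a x \<in> M" using MOD by (simp add: is_module_def)
lemma m_add: "a \<in> S0 n r \<Longrightarrow> x \<in> M \<Longrightarrow> y \<in> M \<Longrightarrow> act a (x + y) = act a x + act a y"
  using MOD by (simp add: is_module_def)
lemma m_scale: "a \<in> S0 n r \<Longrightarrow> x \<in> M \<Longrightarrow> act a (sm c x) = sm c (act a x)"
  using MOD by (simp add: is_module_def)
lemma m_plus: "a \<in> S0 n r \<Longrightarrow> b \<in> S0 n r \<Longrightarrow> x \<in> M \<Longrightarrow> act (a + b) x = act a x + act b x"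
  using MOD by (simp add: is_module_def)
lemma m_smult: "a \<in> S0 n r \<Longrightarrow> x \<in> M \<Longrightarrow> act (\<lambda>v. fscale c (a v)) x = sm c (act a x)"
  using MOD by (simp add: is_module_def)
lemma m_comp: "a \<in> S0 n r \<Longrightarrow> b \<in> S0 n r \<Longrightarrow> x \<in> M \<Longrightarrow> act (a \<circ> b) x = act a (act b x)"
  using MOD by (simp add: is_module_def)
lemma m_one: "x \<in> M \<Longrightarrow> act (S0one n r) x = x"
  using MOD by (simp add: is_module_def)

lemma m_zeroM: "0 \<in> M" using m_sub m_mod by (simp add: module.subspace_def)
lemma m_addM: "x \<in> M \<Longrightarrow> y \<in> M \<Longrightarrow> x + y \<in> M" using m_sub m_mod by (simp add: module.subspace_def)
lemma m_scaleM: "x \<in> M \<Longrightarrow> sm c x \<in> M" using m_sub m_mod by (simp add: module.subspace_def)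

lemma m_act0: "x \<in> M \<Longrightarrow> act 0 x = 0"
proof -
  assume x: "x \<in> M"
  have "act (0 + 0) x = act 0 x + act 0 x" using m_plus[OF S0.zero S0.zero x] .
  then show ?thesis by simp
qed

lemma m_actx0: "a \<in> S0 n r \<Longrightarrow> act a 0 = 0"
proof -
  assume a: "a \<in> S0 n r"
  have "act a (0 + 0) = act a 0 + act a 0" using m_add[OF a m_zeroM m_zeroM] .
  then show ?thesis by simp
qed

lemma m_sum: "finite A \<Longrightarrow> (\<And>i. i \<in> A \<Longrightarrow> f i \<in> S0 n r) \<Longrightarrow> x \<in> M \<Longrightarrow>
    act (\<Sum>i\<in>A. f i) x = (\<Sum>i\<in>A. act (f i) x)"
proof (induction A rule: finite_induct)
  case empty then show ?case by (simp only: sum.empty) (rule m_act0)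
next
  case (insert i A)
  have s: "(\<Sum>i\<in>A. f i) \<in> S0 n r" using insert by (intro S0_sum) auto
  have "act (\<Sum>i\<in>insert i A. f i) x = act (f i + (\<Sum>i\<in>A. f i)) x"
    by (simp only: sum.insert[OF insert(1,2)])
  also have "\<dots> = act (f i) x + act (\<Sum>i\<in>A. f i) x"
    by (rule m_plus[OF _ s]) (use insert in auto)
  also have "\<dots> = act (f i) x + (\<Sum>i\<in>A. act (f i) x)"
    using insert.IH insert.prems by (simp only: insert_iff) metis
  finally show ?case by (simp only: sum.insert[OF insert(1,2)])
qed

end

lemma ro_comps: "A \<in> mats n r \<Longrightarrow> ro n A \<in> comps n r"
  by (auto simp: comps_def mats_def ro_def)

lemma K_notcomps: "la \<notin> comps n r \<Longrightarrow> K_op n r la = 0"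
  by (rule rep_eqI) (auto intro!: rep_ops simp: K_ebas dest: ro_comps)

lemma K_S0: "K_op n r la \<in> S0 n r"
  by (cases "la \<in> comps n r") (auto intro: S0.gen_k S0.zero simp: K_notcomps)

lemma rep_sum: "finite A \<Longrightarrow> (\<And>i. i \<in> A \<Longrightarrow> rep n r (f i)) \<Longrightarrow> rep n r (\<Sum>i\<in>A. f i)"
  by (induction A rule: finite_induct) (auto intro: rep_zero rep_add)

lemma S0one_sum: "S0one n r = (\<Sum>la \<in> ro n ` mats n r. K_op n r la)"
proof (rule rep_eqI)
  show "rep n r (S0one n r)" by (auto simp: rep_def S0one_def)
  show "rep n r (\<Sum>la \<in> ro n ` mats n r. K_op n r la)" by (rule rep_sum) (auto simp: finite_mats rep_K)
  fix A assume A: "A \<in> mats n r"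
  have "(\<Sum>la \<in> ro n ` mats n r. K_op n r la) (ebas A) = (\<Sum>la \<in> ro n ` mats n r. K_op n r la (ebas A))"
    by (rule sum_fun_apply)
  also have "\<dots> = (\<Sum>la \<in> ro n ` mats n r. if la = ro n A then ebas A else 0)"
    using A by (intro sum.cong) (auto simp: K_ebas)
  also have "\<dots> = ebas A" using A finite_mats by simp
  finally show "S0one n r (ebas A) = (\<Sum>la \<in> ro n ` mats n r. K_op n r la) (ebas A)"
    using A by (simp add: S0one_def lin_ext_ebas)
qed

lemma S0one_S0: "S0one n r \<in> S0 n r"
proof -
  have "(\<Sum>la \<in> A. K_op n r la) \<in> S0 n r" if "finite A" for A :: "(nat \<Rightarrow> nat) set"
    using that by (intro S0_sum K_S0)
  then show ?thesis unfolding S0one_sum using finite_mats by auto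
qed


primrec fw :: "nat \<Rightarrow> nat \<Rightarrow> ((vect \<Rightarrow> vect) \<Rightarrow> 'm \<Rightarrow> 'm) \<Rightarrow> 'm \<Rightarrow> nat list \<Rightarrow> 'm" where
  "fw n r act y [] = y"
| "fw n r act y (j # u) = act (F_op n r j) (fw n r act y u)"

primrec wt :: "(nat \<Rightarrow> nat) \<Rightarrow> nat list \<Rightarrow> nat \<Rightarrow> nat" where
  "wt la [] = la"
| "wt la (j # u) = Fsh (wt la u) j"

definition mm :: "nat \<Rightarrow> (nat \<Rightarrow> nat) \<Rightarrow> nat" where
  "mm n la = (\<Sum>i<n. i * la i)"

lemma sum_upd2:
  fixes g :: "nat \<Rightarrow> nat"
  assumes "j < n" "Suc j < n"
  shows "(\<Sum>i<n. i * (g(j := a, Suc j := b)) i) + j * g j + Suc j * g (Suc j)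
       = (\<Sum>i<n. i * g i) + j * a + Suc j * b"
proof -
  let ?S = "{..<n} - {j} - {Suc j}"
  have d: "\<And>f :: nat \<Rightarrow> nat. (\<Sum>i<n. f i) = f j + f (Suc j) + (\<Sum>i\<in>?S. f i)"
  proof -
    fix f :: "nat \<Rightarrow> nat"
    have "(\<Sum>i<n. f i) = f j + (\<Sum>i\<in>{..<n} - {j}. f i)"
      using assms by (subst sum.remove[of "{..<n}" j]) auto
    also have "(\<Sum>i\<in>{..<n} - {j}. f i) = f (Suc j) + (\<Sum>i\<in>?S. f i)"
      using assms by (subst sum.remove[of "{..<n} - {j}" "Suc j"]) auto
    finally show "(\<Sum>i<n. f i) = f j + f (Suc j) + (\<Sum>i\<in>?S. f i)" by simp
  qed
  have e: "(\<Sum>i\<in>?S. i * (g(j := a, Suc j := b)) i) = (\<Sum>i\<in>?S. i * g i)"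
    by (rule sum.cong) auto
  show ?thesis
    apply (subst d[of "\<lambda>i. i * (g(j := a, Suc j := b)) i"])
    apply (subst d[of "\<lambda>i. i * g i"])
    using e by simp
qed

lemma mm_Fsh: assumes "Suc j < n" "0 < la j" shows "mm n (Fsh la j) = mm n la + 1"
proof -
  obtain k where k: "la j = Suc k" using assms(2) by (cases "la j") auto
  have "mm n (Fsh la j) + j * la j + Suc j * la (Suc j) = mm n la + j * (la j - 1) + Suc j * (la (Suc j) + 1)"
    unfolding mm_def Fsh_def by (rule sum_upd2) (use assms in auto)
  then show ?thesis using k by (simp add: algebra_simps)
qed

lemma hw_scalar:
  fixes sm :: "complex \<Rightarrow> 'm::ab_group_add \<Rightarrow> 'm"
  assumes MOD: "is_module n r sm M act" and y: "y \<in> M" and Ky: "act (K_op n r la) y = y"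
    and Ey: "\<And>i. Suc i < n \<Longrightarrow> act (E_op n r i) y = 0" and a: "a \<in> S0 n r"
  shows "\<exists>c. act (K_op n r la \<circ> a) y = sm c y"
proof -
  interpret module sm by (rule m_mod[OF MOD])
  define valid where "valid u \<longleftrightarrow> (\<forall>j\<in>set u. Suc j < n)" for u :: "nat list"
  define U where "U = span (fw n r act y ` {u. valid u})"
  note cl = m_closed[OF MOD] and cmp = m_comp[OF MOD] and pl = m_plus[OF MOD]
    and smu = m_smult[OF MOD] and a0 = m_act0[OF MOD] and ax0 = m_actx0[OF MOD]
  have KS: "K_op n r mu \<in> S0 n r" for mu by (rule K_S0)
  have fwM: "valid u \<Longrightarrow> fw n r act y u \<in> M" for u
    by (induction u) (auto simp: valid_def y intro!: cl S0.gen_f)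
  have fwK: "valid u \<Longrightarrow> act (K_op n r mu) (fw n r act y u) = (if mu = wt la u then fw n r act y u else 0)" for u mu
  proof (induction u arbitrary: mu)
    case Nil
    have "act (K_op n r mu) y = act (K_op n r mu) (act (K_op n r la) y)" using Ky by simp
    also have "\<dots> = act (K_op n r mu \<circ> K_op n r la) y" using cmp[OF KS KS y] by simp
    finally show ?case using Ky a0[OF y] by (simp add: O1 split: if_splits)
  next
    case (Cons j u)
    let ?z = "fw n r act y u" and ?nu = "wt la u"
    have v: "valid u" "Suc j < n" using Cons.prems by (auto simp: valid_def)
    have zM: "?z \<in> M" using fwM v by blast
    have zK: "act (K_op n r ?nu) ?z = ?z" using Cons.IH[OF v(1), of ?nu] by simp
    have FS: "F_op n r j \<in> S0 n r" by (rule S0.gen_f[OF v(2)])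
    have "act (K_op n r mu) (fw n r act y (j # u)) = act (K_op n r mu) (act (F_op n r j) (act (K_op n r ?nu) ?z))"
      using zK by simp
    also have "\<dots> = act (K_op n r mu \<circ> F_op n r j \<circ> K_op n r ?nu) ?z"
      using cmp[OF S0.mult[OF KS FS] KS zM] cmp[OF KS FS cl[OF KS zM]] by simp
    also have "\<dots> = (if mu = Fsh ?nu j then act (F_op n r j \<circ> K_op n r ?nu) ?z else act 0 ?z)"
      using O2[OF v(2)] by simp
    also have "\<dots> = (if mu = Fsh ?nu j then act (F_op n r j) ?z else 0)"
      using cmp[OF FS KS zM] zK a0[OF zM] by simp
    finally show ?case by simp
  qed
  have fwm: "valid u \<Longrightarrow> fw n r act y u = 0 \<or> mm n (wt la u) = mm n la + length u" for u
  proof (induction u)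
    case Nil then show ?case by simp
  next
    case (Cons j u)
    let ?z = "fw n r act y u" and ?nu = "wt la u"
    have v: "valid u" "Suc j < n" using Cons.prems by (auto simp: valid_def)
    have zM: "?z \<in> M" using fwM v by blast
    have FS: "F_op n r j \<in> S0 n r" by (rule S0.gen_f[OF v(2)])
    show ?case
    proof (cases "?z = 0")
      case True then show ?thesis using ax0[OF FS] by simp
    next
      case False
      then have m: "mm n ?nu = mm n la + length u" using Cons.IH[OF v(1)] by simp
      show ?thesis
      proof (cases "?nu j = 0")
        case True
        have zK: "act (K_op n r ?nu) ?z = ?z" using fwK[OF v(1), of ?nu] by simp
        have "fw n r act y (j # u) = act (F_op n r j) (act (K_op n r ?nu) ?z)" using zK by simp
        also have "\<dots> = act (F_op n r j \<circ> K_op n r ?nu) ?z" using cmp[OF FS KS zM] by simp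
        also have "\<dots> = 0" using O6b[of ?nu j n r, OF True] a0[OF zM] by simp
        finally show ?thesis by simp
      next
        case False
        then show ?thesis using m mm_Fsh[OF v(2), of ?nu] by simp
      qed
    qed
  qed
  have fwK0: "valid u \<Longrightarrow> u \<noteq> [] \<Longrightarrow> act (K_op n r la) (fw n r act y u) = 0" for u
    using fwK[of u la] fwm[of u] by (cases u) auto
  have UM: "U \<subseteq> M" unfolding U_def by (rule span_minimal) (use fwM m_sub[OF MOD] in auto)
  have lift: "\<forall>z\<in>U. act b z \<in> P"
    if b: "b \<in> S0 n r" and P: "subspace P" and base: "\<And>u. valid u \<Longrightarrow> act b (fw n r act y u) \<in> P" for b P
  proof
    fix z assume z: "z \<in> U"
    have "z \<in> M \<and> act b z \<in> P" using z[unfolded U_def]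
    proof (rule span_induct)
      show "subspace {z. z \<in> M \<and> act b z \<in> P}"
        unfolding subspace_def
        using P[unfolded subspace_def] m_zeroM[OF MOD] m_addM[OF MOD] m_scaleM[OF MOD]
          ax0[OF b] m_add[OF MOD b] m_scale[OF MOD b] by auto
      fix x assume "x \<in> fw n r act y ` {u. valid u}"
      then show "x \<in> M \<and> act b x \<in> P" using fwM base by auto
    qed
    then show "act b z \<in> P" by simp
  qed
  have subU: "subspace U" unfolding U_def by simp
  have inU: "valid u \<Longrightarrow> fw n r act y u \<in> U" for u unfolding U_def by (intro span_base) auto
  have FU: "\<forall>z\<in>U. act (F_op n r j) z \<in> U" if j: "Suc j < n" for j
  proof (rule lift[OF S0.gen_f[OF j] subU])
    fix u assume "valid u"
    then have "valid (j # u)" using j by (simp add: valid_def)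
    then show "act (F_op n r j) (fw n r act y u) \<in> U" using inU by fastforce
  qed
  have KU: "\<forall>z\<in>U. act (K_op n r mu) z \<in> U" for mu
    by (rule lift[OF KS subU]) (use fwK inU span_zero U_def in auto)
  have EfU: "valid u \<Longrightarrow> Suc i < n \<Longrightarrow> act (E_op n r i) (fw n r act y u) \<in> U" for u i
  proof (induction u)
    case Nil then show ?case using Ey span_zero U_def by simp
  next
    case (Cons j u)
    let ?z = "fw n r act y u" and ?nu = "wt la u"
    have v: "valid u" "Suc j < n" using Cons.prems by (auto simp: valid_def)
    have i: "Suc i < n" by fact
    have zM: "?z \<in> M" using fwM v by blast
    have zK: "act (K_op n r ?nu) ?z = ?z" using fwK[OF v(1), of ?nu] by simp
    have FS: "F_op n r j \<in> S0 n r" by (rule S0.gen_f[OF v(2)])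
    have ES: "E_op n r i \<in> S0 n r" by (rule S0.gen_e[OF i])
    have IH: "act (E_op n r i) ?z \<in> U" using Cons.IH[OF v(1) i] .
    show ?case
    proof (cases "i = j")
      case False
      have "act (E_op n r i) (fw n r act y (j # u)) = act (E_op n r i \<circ> F_op n r j) ?z"
        using cmp[OF ES FS zM] by simp
      also have "\<dots> = act (F_op n r j \<circ> E_op n r i) ?z" using O4[OF i v(2) False] by simp
      also have "\<dots> = act (F_op n r j) (act (E_op n r i) ?z)" using cmp[OF FS ES zM] by simp
      finally show ?thesis using FU[OF v(2)] IH by simp
    next
      case True
      let ?c = "cc ?nu i"
      have S1: "E_op n r i \<circ> F_op n r i \<circ> K_op n r ?nu \<in> S0 n r" using ES FS KS True
        by (intro S0.mult) auto
      have S2: "F_op n r i \<circ> E_op n r i \<circ> K_op n r ?nu \<in> S0 n r" using ES FS KS True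
        by (intro S0.mult) auto
      have S3: "(\<lambda>v. fscale ?c (K_op n r ?nu v)) \<in> S0 n r" using KS by (rule S0.smult)
      have "act (E_op n r i) (fw n r act y (j # u)) = act (E_op n r i) (act (F_op n r i) (act (K_op n r ?nu) ?z))"
        using zK True by simp
      also have "\<dots> = act (E_op n r i \<circ> F_op n r i \<circ> K_op n r ?nu) ?z"
        using cmp[OF S0.mult[OF ES FS[unfolded True[symmetric]]] KS zM] cmp[OF ES FS[unfolded True[symmetric]] cl[OF KS zM]]
        by simp
      also have "\<dots> = act ((F_op n r i \<circ> E_op n r i \<circ> K_op n r ?nu) + (\<lambda>v. fscale ?c (K_op n r ?nu v))) ?z"
        using O5[OF i, of r ?nu] by simp
      also have "\<dots> = act (F_op n r i \<circ> E_op n r i \<circ> K_op n r ?nu) ?z + act (\<lambda>v. fscale ?c (K_op n r ?nu v)) ?z"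
        by (rule pl[OF S2 S3 zM])
      also have "\<dots> = act (F_op n r i) (act (E_op n r i) ?z) + sm ?c ?z"
        using cmp[OF S0.mult[OF FS[unfolded True[symmetric]] ES] KS zM]
          cmp[OF FS[unfolded True[symmetric]] ES cl[OF KS zM]] smu[OF KS zM] zK by simp
      finally show ?thesis
        using FU[OF i] IH inU[OF v(1)] span_add span_scale U_def by auto
    qed
  qed
  have EU: "\<forall>z\<in>U. act (E_op n r i) z \<in> U" if i: "Suc i < n" for i
    by (rule lift[OF S0.gen_e[OF i] subU]) (use EfU i in auto)
  have allU: "b \<in> S0 n r \<Longrightarrow> \<forall>z\<in>U. act b z \<in> U" for b
  proof (induction rule: S0.induct)
    case zero show ?case
    proof
      fix z assume "z \<in> U"
      then have "z \<in> M" using UM by auto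
      then have e: "act 0 z = 0" by (rule a0)
      show "act 0 z \<in> U" unfolding e U_def by (rule span_zero)
    qed
  next
    case (gen_k la') then show ?case using KU by blast
  next
    case (gen_e i) then show ?case using EU by blast
  next
    case (gen_f i) then show ?case using FU by blast
  next
    case (add a b) then show ?case using pl UM span_add U_def by (auto simp del: plus_fun_apply)
  next
    case (smult a c) then show ?case using smu UM span_scale U_def by (auto simp del: fscale_apply)
  next
    case (mult a b) show ?case
    proof
      fix z assume z: "z \<in> U"
      have e: "act (a \<circ> b) z = act a (act b z)" using cmp[OF mult.hyps(1,2)] z UM by blast
      show "act (a \<circ> b) z \<in> U" unfolding e using mult.IH z by blast
    qed
  qed
  have yU: "y \<in> U" using inU[of "[]"] by (simp add: valid_def)
  have KY: "\<forall>z\<in>U. act (K_op n r la) z \<in> span {y}"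
  proof (rule lift[OF KS])
    show "subspace (span {y})" by simp
    fix u assume "valid u"
    then show "act (K_op n r la) (fw n r act y u) \<in> span {y}"
    proof (cases "u = []")
      case True then show ?thesis using Ky by (auto intro: span_base)
    next
      case False
      have e: "act (K_op n r la) (fw n r act y u) = 0" by (rule fwK0) fact+
      show ?thesis unfolding e by (rule span_zero)
    qed
  qed
  have "act a y \<in> U" using allU[OF a] yU by blast
  then have "act (K_op n r la) (act a y) \<in> span {y}" using KY by blast
  then have "act (K_op n r la \<circ> a) y \<in> span {y}" using cmp[OF KS a y] by simp
  then show ?thesis unfolding span_singleton by auto
qed


definition cbc :: "mat \<Rightarrow> bool" where
  "cbc A \<longleftrightarrow> (\<forall>i j. 0 < A i j \<longrightarrow> (\<forall>i' s. i' \<le> i \<longrightarrow> j < s \<longrightarrow> A i' s = 0))"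

lemma cb_iff: "cb n r la = {A \<in> mats n r. co n A = la \<and> cbc A}"
  by (auto simp: cb_def cbc_def)

lemma not_cbc: "\<not> cbc A \<longleftrightarrow> (\<exists>i j i' s. 0 < A i j \<and> i' \<le> i \<and> j < s \<and> 0 < A i' s)"
  by (auto simp: cbc_def)

lemma not_cbcI: "0 < A i j \<Longrightarrow> i' \<le> i \<Longrightarrow> j < s \<Longrightarrow> 0 < A i' s \<Longrightarrow> \<not> cbc A"
  by (auto simp: cbc_def)

lemma cbc_E:
  assumes A: "A \<in> mats n r" and nc: "\<not> cbc A" and i: "Suc i < n" and rp: "0 < ro n A (Suc i)"
  shows "\<not> cbc (Emv A i)"
proof -
  obtain i0 j0 i1 s where w: "0 < A i0 j0" "i1 \<le> i0" "j0 < s" "0 < A i1 s" using nc not_cbc by blast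
  obtain jj where jj: "0 < A (Suc i) jj" using rp ro_pos[OF A] by blast
  define p where "p = gpos A (Suc i)"
  have gp3: "\<And>j. 0 < A (Suc i) j \<Longrightarrow> j \<le> p" using gpos_props(3)[OF A jj] p_def by simp
  define B where "B = mv A (Suc i) p i"
  have BE: "Emv A i = B" by (simp add: Emv_def p_def B_def)
  have ent: "B k l = (if l = p \<and> k = i then Suc (A k l) else if l = p \<and> k = Suc i then A k l - 1 else A k l)" for k l
    by (simp add: mv_def B_def)
  have Bip: "0 < B i p" by (simp add: ent)
  have keep: "0 < B k l" if "0 < A k l" "\<not> ((k, l) = (Suc i, p) \<and> A (Suc i) p = 1)" for k l
    using that by (auto simp: ent)
  show ?thesis unfolding BE
  proof (cases "(i0, j0) = (Suc i, p) \<and> A (Suc i) p = 1")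
    case True
    have "i1 \<noteq> Suc i"
    proof
      assume "i1 = Suc i"
      then have "s \<le> p" using gp3 w(4) by simp
      then show False using True w(3) by simp
    qed
    then have i1: "i1 \<le> i" using w(2) True by simp
    have ps: "p < s" using True w(3) by simp
    have "0 < B i1 s" using keep[OF w(4)] ps by auto
    then show "\<not> cbc B" using not_cbcI[of B i p i1 s] Bip i1 ps by blast
  next
    case F1: False
    show "\<not> cbc B"
    proof (cases "(i1, s) = (Suc i, p) \<and> A (Suc i) p = 1")
      case True
      have b0: "0 < B i0 j0" using keep[OF w(1)] True w(3) by auto
      have "i \<le> i0" using True w(2) by simp
      moreover have "j0 < p" using True w(3) by simp
      ultimately show ?thesis using not_cbcI[of B i0 j0 i p] b0 Bip by blast
    next
      case False
      then show ?thesis using not_cbcI[of B i0 j0 i1 s] keep[OF w(1) F1] w(2) w(3) keep[OF w(4)] by metis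
    qed
  qed
qed

lemma cbc_F:
  assumes A: "A \<in> mats n r" and nc: "\<not> cbc A" and i: "Suc i < n" and rp: "0 < ro n A i"
  shows "\<not> cbc (Fmv A i)"
proof -
  obtain i0 j0 i1 s where w: "0 < A i0 j0" "i1 \<le> i0" "j0 < s" "0 < A i1 s" using nc not_cbc by blast
  obtain jj where jj: "0 < A i jj" using rp ro_pos[OF A] by blast
  define q where "q = lpos A i"
  have lp2: "\<And>j. 0 < A i j \<Longrightarrow> q \<le> j" using lpos_props(2)[of A i jj, OF jj] q_def by simp
  define B where "B = mv A i q (Suc i)"
  have BF: "Fmv A i = B" by (simp add: Fmv_def q_def B_def)
  have ent: "B k l = (if l = q \<and> k = Suc i then Suc (A k l) else if l = q \<and> k = i then A k l - 1 else A k l)" for k l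
    by (simp add: mv_def B_def)
  have Biq: "0 < B (Suc i) q" by (simp add: ent)
  have keep: "0 < B k l" if "0 < A k l" "\<not> ((k, l) = (i, q) \<and> A i q = 1)" for k l
    using that by (auto simp: ent)
  show ?thesis unfolding BF
  proof (cases "(i0, j0) = (i, q) \<and> A i q = 1")
    case True
    have i1: "i1 \<le> Suc i" using w(2) True by simp
    have qs: "q < s" using True w(3) by simp
    have "0 < B i1 s" using keep[OF w(4)] qs by auto
    then show "\<not> cbc B" using not_cbcI[of B "Suc i" q i1 s] Biq i1 qs by blast
  next
    case F1: False
    show "\<not> cbc B"
    proof (cases "(i1, s) = (i, q) \<and> A i q = 1")
      case True
      have "i0 \<noteq> i"
      proof
        assume "i0 = i"
        then have "q \<le> j0" using lp2 w(1) by simp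
        then show False using True w(3) by simp
      qed
      then have i0: "Suc i \<le> i0" using w(2) True by simp
      have b0: "0 < B i0 j0" using keep[OF w(1)] \<open>i0 \<noteq> i\<close> by auto
      have "j0 < q" using True w(3) by simp
      then show ?thesis using not_cbcI[of B i0 j0 "Suc i" q] b0 i0 Biq by blast
    next
      case False
      then show ?thesis using not_cbcI[of B i0 j0 i1 s] keep[OF w(1) F1] w(2) w(3) keep[OF w(4)] by metis
    qed
  qed
qed


lemma cb_sub_B: "cb n r la \<subseteq> B_la n r la"
proof
  fix A assume "A \<in> cb n r la"
  then have A: "A \<in> mats n r" "co n A = la" "cbc A" by (auto simp: cb_iff)
  have "\<not> open_cols_wrt A al" if al: "al \<in> maxset n la" "al \<noteq> replicate n 1" for al
  proof
    assume op: "open_cols_wrt A al"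
    have sc: "\<forall>k\<in>set al. 0 < k" "sum_list al = n" using al(1) by (auto simp: maxset_def strong_comps_def)
    obtain k where k: "k < length al" "al ! k \<noteq> 1"
    proof (rule ccontr)
      assume "\<not> thesis"
      with that have "\<forall>y\<in>set al. y = 1" by (metis in_set_conv_nth)
      then have "replicate (length al) 1 = al" by (rule replicate_length_same)
      moreover then have "length al = n" using sc(2) by (metis sum_list_replicate mult_1_right of_nat_id)
      ultimately show False using al(2) by simp
    qed
    have pos: "0 < al ! k" using sc(1) k(1) by (simp add: nth_mem)
    define s where "s = piece_start al k"
    define t where "t = s + al ! k - 1"
    have st: "s < t" using pos k(2) unfolding t_def by simp
    have cond: "la s \<noteq> 0" "la t \<noteq> 0" using al(1) k unfolding maxset_def s_def t_def by auto
    obtain i where i: "0 < A i s" using cond(1) co_pos[OF A(1), of s] A(2) by auto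
    obtain i' where i': "0 < A i' t" using cond(2) co_pos[OF A(1), of t] A(2) by auto
    have "i < i'"
    proof (rule ccontr)
      assume "\<not> i < i'"
      then have "i' \<le> i" by simp
      then have "A i' t = 0" using A(3) i st unfolding cbc_def by blast
      then show False using i' by simp
    qed
    moreover have "open_on_cols A {s ..< s + al ! k}" using op k(1) unfolding open_cols_wrt_def s_def by blast
    ultimately have "A i s * A i' t = 0" using st pos unfolding open_on_cols_def t_def by auto
    then show False using i i' by simp
  qed
  then show "A \<in> B_la n r la" using A unfolding B_la_def B_la_al_def by auto
qed

lemma cb_row1: "cbc A \<Longrightarrow> 0 < A i j \<Longrightarrow> 0 < A i j' \<Longrightarrow> j = j'"
  unfolding cbc_def by (metis less_irrefl linorder_neqE_nat order_refl)

lemma row_val: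
  assumes A: "A \<in> mats n r" and c: "cbc A" and p: "0 < A i j"
  shows "ro n A i = A i j"
proof -
  have j: "j < n" using mats_pos_lt[OF A p] by simp
  have "ro n A i = (\<Sum>l<n. if l = j then A i j else 0)"
    unfolding ro_def by (rule sum.cong[OF refl]) (use cb_row1[OF c p] in \<open>auto intro: gr0I\<close>)
  also have "\<dots> = A i j" using j by simp
  finally show ?thesis .
qed

lemma cb_left:
  assumes A: "A \<in> mats n r" and c: "cbc A" and p: "0 < A i j"
  shows "(\<Sum>l<j. co n A l) \<le> (\<Sum>k<i. ro n A k)"
proof -
  have ij: "i < n" "j < n" using mats_pos_lt[OF A p] by auto
  have z: "A k l = 0" if "l < j" "i \<le> k" for k l
  proof (rule ccontr)
    assume "A k l \<noteq> 0"
    then have "0 < A k l" by simp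
    then have "A i j = 0" using c that unfolding cbc_def by blast
    then show False using p by simp
  qed
  have "(\<Sum>l<j. co n A l) = (\<Sum>l<j. \<Sum>k<n. A k l)" by (simp add: co_def)
  also have "\<dots> = (\<Sum>l<j. \<Sum>k<i. A k l)"
    by (rule sum.cong[OF refl], rule sum.mono_neutral_right) (use ij z in auto)
  also have "\<dots> = (\<Sum>k<i. \<Sum>l<j. A k l)" by (rule sum.swap)
  also have "\<dots> \<le> (\<Sum>k<i. \<Sum>l<n. A k l)"
    by (rule sum_mono, rule sum_mono2) (use ij in auto)
  finally show ?thesis by (simp add: ro_def)
qed

lemma cb_right:
  assumes A: "A \<in> mats n r" and c: "cbc A" and p: "0 < A i j"
  shows "(\<Sum>k<Suc i. ro n A k) \<le> (\<Sum>l<Suc j. co n A l)"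
proof -
  have ij: "i < n" "j < n" using mats_pos_lt[OF A p] by auto
  have z: "A k l = 0" if "k \<le> i" "j < l" for k l
    using c p that unfolding cbc_def by blast
  have "(\<Sum>k<Suc i. ro n A k) = (\<Sum>k<Suc i. \<Sum>l<n. A k l)" by (simp add: ro_def)
  also have "\<dots> = (\<Sum>k<Suc i. \<Sum>l<Suc j. A k l)"
    by (rule sum.cong[OF refl], rule sum.mono_neutral_right) (use ij z in auto)
  also have "\<dots> = (\<Sum>l<Suc j. \<Sum>k<Suc i. A k l)" by (rule sum.swap)
  also have "\<dots> \<le> (\<Sum>l<Suc j. \<Sum>k<n. A k l)"
    by (rule sum_mono, rule sum_mono2) (use ij in auto)
  finally show ?thesis by (simp add: co_def)
qed

lemma cb_unique:
  assumes A: "A \<in> mats n r" and A': "A' \<in> mats n r" and c: "cbc A" and c': "cbc A'"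
    and co: "co n A = co n A'" and ro: "ro n A = ro n A'"
  shows "A = A'"
proof (intro ext)
  fix i j
  show "A i j = A' i j"
  proof (cases "0 < ro n A i")
    case False
    then have "A i j = 0" "A' i j = 0" using ro_pos[OF A, of i] ro_pos[OF A', of i] ro by auto
    then show ?thesis by simp
  next
    case True
    obtain j1 where j1: "0 < A i j1" using True ro_pos[OF A] by blast
    obtain j2 where j2: "0 < A' i j2" using True ro_pos[OF A'] ro by (metis)
    have lt: False if B: "B \<in> mats n r" "cbc B" "0 < B i a" and B': "B' \<in> mats n r" "cbc B'" "0 < B' i b"
      and coB: "co n B = co n B'" and roB: "ro n B = ro n B'" and ab: "a < b" and rp: "0 < ro n B i" for B B' a b
    proof -
      have "(\<Sum>k<Suc i. ro n B k) \<le> (\<Sum>l<Suc a. co n B l)" by (rule cb_right[OF B])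
      also have "\<dots> \<le> (\<Sum>l<b. co n B l)" by (rule sum_mono2) (use ab in auto)
      also have "\<dots> = (\<Sum>l<b. co n B' l)" using coB by simp
      also have "\<dots> \<le> (\<Sum>k<i. ro n B' k)" by (rule cb_left[OF B'])
      also have "\<dots> = (\<Sum>k<i. ro n B k)" using roB by simp
      finally show False using rp by simp
    qed
    have "j1 = j2"
    proof (rule ccontr)
      assume "j1 \<noteq> j2"
      then consider "j1 < j2" | "j2 < j1" by linarith
      then show False
      proof cases
        case 1 then show False using lt[OF A c j1 A' c' j2 co ro _ True] by blast
      next
        case 2 then show False using lt[OF A' c' j2 A c j1 co[symmetric] ro[symmetric] _] True ro by auto
      qed
    qed
    have v: "A i j1 = A' i j1" using row_val[OF A c j1] row_val[OF A' c' j2] ro \<open>j1 = j2\<close> by metis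
    show ?thesis
    proof (cases "j = j1")
      case True then show ?thesis using v by simp
    next
      case False
      then have "A i j = 0" "A' i j = 0" using cb_row1[OF c j1] cb_row1[OF c' j2] \<open>j1 = j2\<close>
        by (auto intro: gr0I)
      then show ?thesis by simp
    qed
  qed
qed

definition Dm :: "(nat \<Rightarrow> nat) \<Rightarrow> mat" where
  "Dm la = (\<lambda>i j. if i = j then la i else 0)"

lemma Dm_ro: "la \<in> comps n r \<Longrightarrow> ro n (Dm la) = la"
proof
  fix i assume la: "la \<in> comps n r"
  show "ro n (Dm la) i = la i"
  proof (cases "i < n")
    case True then show ?thesis by (simp add: ro_def Dm_def)
  next
    case False then show ?thesis using la by (simp add: ro_def Dm_def comps_def)
  qed
qed

lemma Dm_co: "la \<in> comps n r \<Longrightarrow> co n (Dm la) = la"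
proof
  fix i assume la: "la \<in> comps n r"
  show "co n (Dm la) i = la i"
  proof (cases "i < n")
    case True then show ?thesis by (simp add: co_def Dm_def)
  next
    case False then show ?thesis using la by (simp add: co_def Dm_def comps_def)
  qed
qed

lemma Dm_mats: "la \<in> comps n r \<Longrightarrow> Dm la \<in> mats n r"
proof -
  assume la: "la \<in> comps n r"
  have "(\<Sum>i<n. \<Sum>j<n. Dm la i j) = (\<Sum>i<n. ro n (Dm la) i)" by (simp add: ro_def)
  also have "\<dots> = r" using Dm_ro[OF la] la by (simp add: comps_def)
  finally show ?thesis using la by (auto simp: mats_def Dm_def comps_def)
qed

lemma Dm_cbc: "cbc (Dm la)" by (auto simp: cbc_def Dm_def split: if_splits)

lemma Dm_cb: "la \<in> comps n r \<Longrightarrow> Dm la \<in> cb n r la"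
  by (simp add: cb_iff Dm_mats Dm_co Dm_cbc)


lemma bullet_comps: "la \<in> comps_bullet n r \<Longrightarrow> la \<in> comps n r" by (simp add: comps_bullet_def)
lemma bullet_mono: "la \<in> comps_bullet n r \<Longrightarrow> i < j \<Longrightarrow> 0 < la j \<Longrightarrow> 0 < la i"
  unfolding comps_bullet_def by (metis (mono_tags, lifting) mem_Collect_eq gr0I)

lemma path:
  assumes la: "la \<in> comps_bullet n r" and Acb: "A \<in> cb n r la" and ne: "A \<noteq> Dm la"
  shows "\<exists>i. Suc i < n \<and> 0 < ro n A (Suc i) \<and> Emv A i \<in> cb n r la \<and> 0 < ro n (Emv A i) i
           \<and> Fmv (Emv A i) i = A \<and> mm n (ro n (Emv A i)) < mm n (ro n A)"
proof -
  have A: "A \<in> mats n r" "co n A = la" "cbc A" using Acb by (auto simp: cb_iff)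
  have colsingle: "co n A l = A l l" if "l < n" "\<And>k. k \<noteq> l \<Longrightarrow> A k l = 0" for l
  proof -
    have "co n A l = (\<Sum>k<n. if k = l then A l l else 0)"
      unfolding co_def by (rule sum.cong[OF refl]) (use that in auto)
    also have "\<dots> = A l l" using that by simp
    finally show ?thesis .
  qed
  have ex: "\<exists>j k. k \<noteq> j \<and> 0 < A k j"
  proof (rule ccontr)
    assume "\<not> ?thesis"
    then have off: "\<And>k l. k \<noteq> l \<Longrightarrow> A k l = 0" by auto
    have "A = Dm la"
    proof (intro ext)
      fix k l
      show "A k l = Dm la k l"
      proof (cases "k = l")
        case False then show ?thesis using off by (simp add: Dm_def)
      next
        case True
        show ?thesis
        proof (cases "l < n")
          case True2: True
          then show ?thesis using colsingle[OF True2 off] A(2) True by (simp add: Dm_def)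
        next
          case False
          then have "la l = 0" using la by (auto simp: comps_bullet_def comps_def)
          then show ?thesis using mats_zero[OF A(1)] False True by (simp add: Dm_def)
        qed
      qed
    qed
    then show False using ne by simp
  qed
  define j where "j = (LEAST j. \<exists>k. k \<noteq> j \<and> 0 < A k j)"
  have c1: "A k l = 0" if "l < j" "k \<noteq> l" for k l
  proof (rule ccontr)
    assume "A k l \<noteq> 0"
    then have "\<exists>k. k \<noteq> l \<and> 0 < A k l" using that by auto
    then have "j \<le> l" unfolding j_def by (rule Least_le)
    then show False using that by simp
  qed
  obtain k0 where k0: "k0 \<noteq> j" "0 < A k0 j"
    using LeastI_ex[OF ex] unfolding j_def[symmetric] by blast
  have jn: "j < n" using mats_pos_lt[OF A(1) k0(2)] by simp
  have c2: "0 < la j" using co_pos[OF A(1), of j] k0 A(2) by auto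
  have c4: "0 < A l l" if "l < j" for l
  proof -
    have "co n A l = A l l" using colsingle[of l] c1 that jn by auto
    moreover have "0 < la l" using bullet_mono[OF la that c2] .
    ultimately show ?thesis using A(2) by simp
  qed
  have c5: "A k j = 0" if "k < j" for k
    using A(3) c4[OF that] that unfolding cbc_def by blast
  have bnd: "\<forall>y. 0 < A y j \<longrightarrow> y \<le> n" using mats_pos_lt[OF A(1)] by (meson less_imp_le)
  define t where "t = (GREATEST k. 0 < A k j)"
  have tp: "0 < A t j" unfolding t_def by (rule GreatestI_nat[of "\<lambda>k. 0 < A k j" k0 n, OF k0(2)]) (use bnd in auto)
  have tmax: "k \<le> t" if "0 < A k j" for k
    unfolding t_def by (rule Greatest_le_nat[of "\<lambda>k. 0 < A k j" k n]) (use that bnd in auto)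
  have tn: "t < n" using mats_pos_lt[OF A(1) tp] by simp
  have k0j: "j < k0" using k0 c5 by (metis linorder_neqE_nat less_irrefl)
  have jt: "j < t" using tmax[OF k0(2)] k0j by simp
  define i where "i = t - 1"
  have ti: "t = Suc i" using jt i_def by simp
  have ji: "j \<le> i" using jt ti by simp
  have in_: "Suc i < n" using tn ti by simp
  have c6: "A t s = 0" if "s \<noteq> j" for s
  proof (cases "s < j")
    case True then show ?thesis using c1[of s t] jt by simp
  next
    case False
    then have "j < s" using that by simp
    then show ?thesis using A(3) tp unfolding cbc_def by blast
  qed
  have gp: "gpos A t = j" by (rule gpos_eq[of A t j, OF tp]) (use c6 in \<open>auto intro: ccontr\<close>)
  have rt: "0 < ro n A (Suc i)" using ro_pos[OF A(1)] tp ti by blast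
  define A' where "A' = mv A t j i"
  have EA: "Emv A i = A'" using gp ti by (simp add: Emv_def A'_def)
  have ent: "A' k l = (if l = j \<and> k = i then Suc (A k l) else if l = j \<and> k = t then A k l - 1 else A k l)" for k l
    by (simp add: A'_def mv_def)
  have cb': "cbc A'"
    unfolding cbc_def
  proof (intro allI impI)
    fix k l i'' s assume pos: "0 < A' k l" and le: "i'' \<le> k" and ls: "l < s"
    show "A' i'' s = 0"
    proof (cases "k = i \<and> l = j")
      case True
      then have "A i'' s = 0" using A(3) tp le ls ti unfolding cbc_def by (metis le_SucI)
      then show ?thesis using ls True ti by (simp add: ent)
    next
      case False
      have Apos: "0 < A k l" using pos False by (auto simp: ent split: if_splits)
      have z: "A i'' s = 0" using A(3) Apos le ls unfolding cbc_def by blast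
      show ?thesis
      proof (cases "i'' = i \<and> s = j")
        case True
        then have "l < j" "i \<le> k" using ls le by auto
        then have "k = l" using c1[of l k] Apos by (metis less_irrefl)
        then show ?thesis using \<open>l < j\<close> \<open>i \<le> k\<close> ji by simp
      next
        case False
        then show ?thesis using z ti by (auto simp: ent)
      qed
    qed
  qed
  have A'm: "A' \<in> mats n r" using Emv_mats[OF A(1) in_ rt] EA by simp
  have A'co: "co n A' = la" using co_Emv[OF A(1) in_ rt] EA A(2) by simp
  have A'cb: "A' \<in> cb n r la" using A'm A'co cb' by (simp add: cb_iff)
  have roA': "ro n A' = Esh (ro n A) i" using ro_Emv[OF A(1) in_ rt] EA by simp
  have r2: "0 < ro n A' i" using roA' by (simp add: Esh_def)
  have lp: "lpos A' i = j"
  proof (rule lpos_eq)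
    show "0 < A' i j" by (simp add: ent)
    fix l assume "0 < A' i l"
    show "j \<le> l"
    proof (rule ccontr)
      assume "\<not> j \<le> l"
      then have "l < j" by simp
      then have "A' i l = A i l" using ti by (simp add: ent)
      then have "A i l = 0" using c1[of l i] \<open>l < j\<close> ji by simp
      then show False using \<open>0 < A' i l\<close> \<open>A' i l = A i l\<close> by simp
    qed
  qed
  have bk: "Fmv A' i = A"
    unfolding Fmv_def lp unfolding A'_def using tp ti by (simp add: mv_back)
  have bk2: "Fsh (Esh (ro n A) i) i = ro n A" using rt by (auto simp: Fsh_def Esh_def fun_eq_iff)
  have "mm n (Fsh (Esh (ro n A) i) i) = mm n (Esh (ro n A) i) + 1"
    by (rule mm_Fsh[OF in_]) (simp add: Esh_def)
  then have mmlt: "mm n (ro n A') < mm n (ro n A)" using bk2 roA' by simp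
  show ?thesis using in_ rt A'cb r2 bk mmlt EA by (intro exI[of _ i]) simp
qed

lemma E_Dm_notcb:
  assumes la: "la \<in> comps_bullet n r" and i: "Suc i < n" and p: "0 < la (Suc i)"
  shows "\<not> cbc (Emv (Dm la) i)"
proof -
  have li: "0 < la i" using bullet_mono[OF la _ p] by simp
  have gp: "gpos (Dm la) (Suc i) = Suc i"
    by (rule gpos_eq) (use p in \<open>auto simp: Dm_def split: if_splits\<close>)
  have e: "Emv (Dm la) i = mv (Dm la) (Suc i) (Suc i) i" using gp by (simp add: Emv_def)
  have "0 < mv (Dm la) (Suc i) (Suc i) i i i" using li by (simp add: mv_def Dm_def)
  moreover have "0 < mv (Dm la) (Suc i) (Suc i) i i (Suc i)" by (simp add: mv_def Dm_def)
  ultimately show ?thesis unfolding e by (intro not_cbcI[of _ i i i "Suc i"]) auto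
qed


lemma span_of_zero: "0 \<in> span_of X" by (simp add: span_of_def)
lemma span_of_add: "v \<in> span_of X \<Longrightarrow> w \<in> span_of X \<Longrightarrow> v + w \<in> span_of X" by (simp add: span_of_def)
lemma span_of_scale: "v \<in> span_of X \<Longrightarrow> fscale c v \<in> span_of X" by (simp add: span_of_def)
lemma span_of_sum: "(\<And>a. a \<in> S \<Longrightarrow> f a \<in> span_of X) \<Longrightarrow> (\<Sum>a\<in>S. f a) \<in> span_of X"
  by (induction S rule: infinite_finite_induct) (auto simp: span_of_zero span_of_add)
lemma ebas_span: "A \<in> X \<Longrightarrow> ebas A \<in> span_of X" by (simp add: span_of_def ebas_def)
lemma span_of_mono: "X \<subseteq> Y \<Longrightarrow> span_of X \<subseteq> span_of Y" by (auto simp: span_of_def)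
lemma proj_span: "proj X v \<in> span_of X" by (simp add: span_of_def proj_def)
lemma proj_id: "v \<in> span_of X \<Longrightarrow> proj X v = v" by (auto simp: span_of_def proj_def fun_eq_iff)
lemma proj_add: "proj X (v + w) = proj X v + proj X w" by (simp add: proj_def fun_eq_iff)
lemma proj_scale: "proj X (fscale c v) = fscale c (proj X v)" by (simp add: proj_def fun_eq_iff)
lemma proj_disj: "v \<in> span_of Y \<Longrightarrow> X \<inter> Y = {} \<Longrightarrow> proj X v = 0"
  by (auto simp: span_of_def proj_def fun_eq_iff)
lemma proj_proj: "proj X (proj Y v) = proj (X \<inter> Y) v" by (simp add: proj_def fun_eq_iff)

lemma span_of_decomp:
  assumes "finite X" "v \<in> span_of X"
  shows "v = (\<Sum>A\<in>X. fscale (v A) (ebas A))"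
proof
  fix B
  have "(\<Sum>A\<in>X. fscale (v A) (ebas A)) B = (\<Sum>A\<in>X. if A = B then v B else 0)"
    by (simp add: sum_fun_apply ebas_def) (rule sum.cong, auto)
  also have "\<dots> = v B" using assms by (auto simp: span_of_def)
  finally show "v B = (\<Sum>A\<in>X. fscale (v A) (ebas A)) B" by simp
qed

lemma rep_inv:
  assumes T: "rep n r T" and g: "\<And>A. A \<in> W \<Longrightarrow> A \<in> mats n r \<Longrightarrow> T (ebas A) \<in> span_of W"
    and v: "v \<in> span_of W"
  shows "T v \<in> span_of W"
proof -
  have "T v = lin_ext n r (\<lambda>A. T (ebas A)) v" by (rule fun_cong[OF rep_self[OF T]])
  also have "\<dots> = (\<Sum>A\<in>mats n r. fscale (v A) (T (ebas A)))" by (simp add: lin_ext_def)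
  also have "\<dots> \<in> span_of W"
  proof (rule span_of_sum)
    fix A assume A: "A \<in> mats n r"
    show "fscale (v A) (T (ebas A)) \<in> span_of W"
    proof (cases "A \<in> W")
      case True then show ?thesis using g A by (intro span_of_scale) auto
    next
      case False then have "v A = 0" using v by (simp add: span_of_def)
      then show ?thesis by (simp add: span_of_zero)
    qed
  qed
  finally show ?thesis .
qed

lemma S0_inv:
  assumes gK: "\<And>A. A \<in> W \<Longrightarrow> A \<in> mats n r \<Longrightarrow> ebas A \<in> span_of W"
    and gE: "\<And>A i. A \<in> W \<Longrightarrow> A \<in> mats n r \<Longrightarrow> Suc i < n \<Longrightarrow> 0 < ro n A (Suc i) \<Longrightarrow> Emv A i \<in> W"
    and gF: "\<And>A i. A \<in> W \<Longrightarrow> A \<in> mats n r \<Longrightarrow> Suc i < n \<Longrightarrow> 0 < ro n A i \<Longrightarrow> Fmv A i \<in> W"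
  shows "a \<in> S0 n r \<Longrightarrow> \<forall>v \<in> span_of W. a v \<in> span_of W"
proof (induction rule: S0.induct)
  case zero show ?case using span_of_zero by (metis zero_fun_apply)
next
  case (gen_k la) show ?case
  proof
    fix v assume v: "v \<in> span_of W"
    show "K_op n r la v \<in> span_of W"
    proof (rule rep_inv[OF rep_K _ v])
      fix A assume "A \<in> W" "A \<in> mats n r"
      then show "K_op n r la (ebas A) \<in> span_of W" using gK span_of_zero by (simp add: K_ebas)
    qed
  qed
next
  case (gen_e i) show ?case
  proof
    fix v assume v: "v \<in> span_of W"
    show "E_op n r i v \<in> span_of W"
    proof (rule rep_inv[OF rep_E _ v])
    fix A assume A: "A \<in> W" "A \<in> mats n r"
    show "E_op n r i (ebas A) \<in> span_of W"
    proof (cases "0 < ro n A (Suc i)")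
      case True
      then have "Emv A i \<in> W" using gE[OF A gen_e] by blast
      then show ?thesis using True A by (simp add: E_ebas ebas_span)
    next
      case False then show ?thesis using A span_of_zero by (simp add: E_ebas)
    qed
    qed
  qed
next
  case (gen_f i) show ?case
  proof
    fix v assume v: "v \<in> span_of W"
    show "F_op n r i v \<in> span_of W"
    proof (rule rep_inv[OF rep_F _ v])
    fix A assume A: "A \<in> W" "A \<in> mats n r"
    show "F_op n r i (ebas A) \<in> span_of W"
    proof (cases "0 < ro n A i")
      case True
      then have "Fmv A i \<in> W" using gF[OF A gen_f] by blast
      then show ?thesis using True A by (simp add: F_ebas ebas_span)
    next
      case False then show ?thesis using A span_of_zero by (simp add: F_ebas)
    qed
    qed
  qed
next
  case (add a b) show ?case
  proof
    fix v assume "v \<in> span_of W"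
    then have "a v \<in> span_of W" "b v \<in> span_of W" using add.IH by auto
    then have "a v + b v \<in> span_of W" by (rule span_of_add)
    then show "(a + b) v \<in> span_of W" by (metis plus_fun_apply)
  qed
next
  case (smult a c) show ?case
  proof
    fix v assume "v \<in> span_of W"
    then have "a v \<in> span_of W" using smult.IH by auto
    then show "fscale c (a v) \<in> span_of W" by (rule span_of_scale)
  qed
next
  case (mult a b) show ?case
  proof
    fix v assume "v \<in> span_of W"
    then show "(a \<circ> b) v \<in> span_of W" using mult.IH by auto
  qed
qed

definition Zs :: "nat \<Rightarrow> nat \<Rightarrow> (nat \<Rightarrow> nat) \<Rightarrow> mat set" where
  "Zs n r la = {A \<in> mats n r. co n A = la}"
definition Ys :: "nat \<Rightarrow> nat \<Rightarrow> (nat \<Rightarrow> nat) \<Rightarrow> mat set" where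
  "Ys n r la = {A \<in> mats n r. co n A = la \<and> \<not> cbc A}"

lemma Z_inv: assumes "a \<in> S0 n r" "v \<in> span_of (Zs n r la)" shows "a v \<in> span_of (Zs n r la)"
proof -
  have "\<forall>v \<in> span_of (Zs n r la). a v \<in> span_of (Zs n r la)"
  proof (rule S0_inv[OF _ _ _ assms(1)])
    show "\<And>A. A \<in> Zs n r la \<Longrightarrow> A \<in> mats n r \<Longrightarrow> ebas A \<in> span_of (Zs n r la)" by (rule ebas_span)
    show "\<And>A i. A \<in> Zs n r la \<Longrightarrow> A \<in> mats n r \<Longrightarrow> Suc i < n \<Longrightarrow> 0 < ro n A (Suc i) \<Longrightarrow> Emv A i \<in> Zs n r la"
      unfolding Zs_def using Emv_mats co_Emv by blast
    show "\<And>A i. A \<in> Zs n r la \<Longrightarrow> A \<in> mats n r \<Longrightarrow> Suc i < n \<Longrightarrow> 0 < ro n A i \<Longrightarrow> Fmv A i \<in> Zs n r la"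
      unfolding Zs_def using Fmv_mats co_Fmv by blast
  qed
  then show ?thesis using assms(2) by blast
qed

lemma Y_inv: assumes "a \<in> S0 n r" "v \<in> span_of (Ys n r la)" shows "a v \<in> span_of (Ys n r la)"
proof -
  have "\<forall>v \<in> span_of (Ys n r la). a v \<in> span_of (Ys n r la)"
  proof (rule S0_inv[OF _ _ _ assms(1)])
    show "\<And>A. A \<in> Ys n r la \<Longrightarrow> A \<in> mats n r \<Longrightarrow> ebas A \<in> span_of (Ys n r la)" by (rule ebas_span)
    show "\<And>A i. A \<in> Ys n r la \<Longrightarrow> A \<in> mats n r \<Longrightarrow> Suc i < n \<Longrightarrow> 0 < ro n A (Suc i) \<Longrightarrow> Emv A i \<in> Ys n r la"
      unfolding Ys_def using Emv_mats co_Emv cbc_E by blast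
    show "\<And>A i. A \<in> Ys n r la \<Longrightarrow> A \<in> mats n r \<Longrightarrow> Suc i < n \<Longrightarrow> 0 < ro n A i \<Longrightarrow> Fmv A i \<in> Ys n r la"
      unfolding Ys_def using Fmv_mats co_Fmv cbc_F by blast
  qed
  then show ?thesis using assms(2) by blast
qed


lemma cb_mats: "cb n r la \<subseteq> mats n r" by (auto simp: cb_iff)

lemma S_carrier_eq: "S_carrier n r la = span_of (cb n r la)"
  using cb_sub_B[of n r la] by (simp add: S_carrier_def Int_absorb1)

lemma S_act_eq: "S_act n r la a v = proj (cb n r la) (a v)"
proof -
  have "(B_la n r la \<inter> cb n r la) \<inter> B_la n r la = cb n r la" using cb_sub_B[of n r la] by blast
  then show ?thesis by (simp add: S_act_def P_act_def proj_proj)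
qed

lemma vs_fscale: "vector_space fscale"
  unfolding vector_space_def by (simp add: fscale_def fun_eq_iff algebra_simps)
lemma mod_fscale: "module fscale" using vs_fscale by (simp add: module_iff_vector_space)

lemma sub_span_of: "module.subspace fscale (span_of X)"
  by (simp add: module.subspace_def[OF mod_fscale] span_of_zero span_of_add span_of_scale)

lemma K_apply: "K_op n r mu v B = (if B \<in> mats n r \<and> ro n B = mu then v B else 0)"
proof -
  have "K_op n r mu v B = (\<Sum>A\<in>mats n r. if A = B then (if ro n A = mu then v B else 0) else 0)"
    unfolding K_op_def lin_ext_apply by (rule sum.cong) (auto simp: ebas_def)
  also have "\<dots> = (if B \<in> mats n r \<and> ro n B = mu then v B else 0)" using finite_mats by simp
  finally show ?thesis .
qed

lemma S0one_id: "X \<subseteq> mats n r \<Longrightarrow> v \<in> span_of X \<Longrightarrow> S0one n r v = v"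
proof
  fix B assume X: "X \<subseteq> mats n r" and v: "v \<in> span_of X"
  have "S0one n r v B = (\<Sum>A\<in>mats n r. if A = B then v B else 0)"
    unfolding S0one_def lin_ext_apply by (rule sum.cong) (auto simp: ebas_def)
  also have "\<dots> = v B" using finite_mats X v by (auto simp: span_of_def)
  finally show "S0one n r v B = v B" .
qed

lemma S_comp:
  assumes a: "a \<in> S0 n r" and b: "b \<in> S0 n r" and x: "x \<in> span_of (cb n r la)"
  shows "proj (cb n r la) (a (b x)) = proj (cb n r la) (a (proj (cb n r la) (b x)))"
proof -
  let ?X = "cb n r la" and ?Y = "Ys n r la" and ?Z = "Zs n r la"
  have XZ: "?X \<subseteq> ?Z" by (auto simp: cb_iff Zs_def)
  have w: "b x \<in> span_of ?Z" using Z_inv[OF b] span_of_mono[OF XZ] x by blast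
  have dec: "b x = proj ?X (b x) + proj ?Y (b x)"
  proof
    fix B
    show "b x B = (proj ?X (b x) + proj ?Y (b x)) B"
      using w by (auto simp: proj_def span_of_def Zs_def Ys_def cb_iff)
  qed
  have "a (b x) = a (proj ?X (b x)) + a (proj ?Y (b x))"
    by (subst dec) (rule lin_add[OF S0_lin[OF a]])
  moreover have "proj ?X (a (proj ?Y (b x))) = 0"
    by (rule proj_disj[OF Y_inv[OF a proj_span]]) (auto simp: cb_iff Ys_def)
  ultimately show ?thesis by (simp add: proj_add)
qed

lemma S_module: "is_module n r fscale (S_carrier n r la) (S_act n r la)"
  unfolding is_module_def S_carrier_eq S_act_eq
proof (intro conjI ballI allI)
  show "vector_space fscale" by (rule vs_fscale)
  show "module.subspace fscale (span_of (cb n r la))" by (rule sub_span_of)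
  fix a x assume a: "a \<in> S0 n r" and x: "x \<in> span_of (cb n r la)"
  show "proj (cb n r la) (a x) \<in> span_of (cb n r la)" by (rule proj_span)
  fix c
  show "proj (cb n r la) (a (fscale c x)) = fscale c (proj (cb n r la) (a x))"
    by (simp add: lin_scale[OF S0_lin[OF a]] proj_scale)
  show "proj (cb n r la) ((\<lambda>v. fscale c (a v)) x) = fscale c (proj (cb n r la) (a x))"
    by (simp add: proj_scale del: fscale_apply)
next
  fix x assume x: "x \<in> span_of (cb n r la)"
  show "proj (cb n r la) (S0one n r x) = x" using S0one_id[OF cb_mats x] proj_id[OF x] by simp
next
  fix a x y assume a: "a \<in> S0 n r" and "x \<in> span_of (cb n r la)" "y \<in> span_of (cb n r la)"
  show "proj (cb n r la) (a (x + y)) = proj (cb n r la) (a x) + proj (cb n r la) (a y)"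
    by (simp add: lin_add[OF S0_lin[OF a]] proj_add del: plus_fun_apply)
next
  fix a b x assume a: "a \<in> S0 n r" and b: "b \<in> S0 n r" and x: "x \<in> span_of (cb n r la)"
  show "proj (cb n r la) ((a + b) x) = proj (cb n r la) (a x) + proj (cb n r la) (b x)"
    by (simp add: proj_add[symmetric] del: plus_fun_apply) (simp add: proj_def fun_eq_iff)
  show "proj (cb n r la) ((a \<circ> b) x) = proj (cb n r la) (a (proj (cb n r la) (b x)))"
    using S_comp[OF a b x] by simp
qed


lemma S_E_ebas:
  assumes "A \<in> cb n r la" "0 < ro n A (Suc i)" "Emv A i \<in> cb n r la"
  shows "S_act n r la (E_op n r i) (ebas A) = ebas (Emv A i)"
proof -
  have "A \<in> mats n r" using assms(1) cb_mats by blast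
  then show ?thesis using assms by (simp add: S_act_eq E_ebas proj_id ebas_span)
qed

lemma S_F_ebas:
  assumes "A \<in> cb n r la" "0 < ro n A i" "Fmv A i \<in> cb n r la"
  shows "S_act n r la (F_op n r i) (ebas A) = ebas (Fmv A i)"
proof -
  have "A \<in> mats n r" using assms(1) cb_mats by blast
  then show ?thesis using assms by (simp add: S_act_eq F_ebas proj_id ebas_span)
qed

lemma S_K_iso:
  assumes z: "z \<in> span_of (cb n r la)" and A: "A \<in> cb n r la"
  shows "S_act n r la (K_op n r (ro n A)) z = fscale (z A) (ebas A)"
proof
  fix B
  show "S_act n r la (K_op n r (ro n A)) z B = fscale (z A) (ebas A) B"
  proof (cases "B \<in> cb n r la \<and> ro n B = ro n A")
    case True
    then have "B = A" using cb_unique[of B n r A] A by (auto simp: cb_iff)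
    then show ?thesis using A cb_mats by (auto simp: S_act_eq proj_def K_apply ebas_def)
  next
    case False
    then have "B \<noteq> A" using A by auto
    then show ?thesis using False by (auto simp: S_act_eq proj_def K_apply ebas_def)
  qed
qed

lemma ebas_nz: "ebas A \<noteq> 0" by (auto simp: ebas_def fun_eq_iff)

lemma S_simple:
  assumes la: "la \<in> comps_bullet n r"
  shows "is_simple_module n r fscale (S_carrier n r la) (S_act n r la)"
proof -
  let ?X = "cb n r la" and ?S = "S_carrier n r la" and ?act = "S_act n r la"
  have lac: "la \<in> comps n r" using la by (rule bullet_comps)
  have D: "Dm la \<in> ?X" using Dm_cb[OF lac] .
  have ne: "?S \<noteq> {0}" using ebas_span[OF D] ebas_nz S_carrier_eq by blast
  have "N = {0} \<or> N = ?S" if N: "is_submodule n r fscale ?S ?act N" for N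
  proof (cases "N \<subseteq> {0}")
    case True
    have "0 \<in> N" using N by (simp add: is_submodule_def module.subspace_def[OF mod_fscale])
    then show ?thesis using True by blast
  next
    case False
    have NS: "N \<subseteq> span_of ?X" and subN: "module.subspace fscale N"
      and cl: "\<And>a x. a \<in> S0 n r \<Longrightarrow> x \<in> N \<Longrightarrow> ?act a x \<in> N"
      using N by (auto simp: is_submodule_def S_carrier_eq)
    have scN: "fscale c x \<in> N" if "x \<in> N" for c x
      using subN that by (simp add: module.subspace_def[OF mod_fscale])
    obtain z where z: "z \<in> N" "z \<noteq> 0" using False by blast
    then obtain A where zA: "z A \<noteq> 0" by (auto simp: fun_eq_iff)
    have A: "A \<in> ?X" using zA NS z(1) by (auto simp: span_of_def)
    have zs: "z \<in> span_of ?X" using NS z(1) by blast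
    have "?act (K_op n r (ro n A)) z = fscale (z A) (ebas A)" by (rule S_K_iso[OF zs A])
    then have "fscale (z A) (ebas A) \<in> N" using cl[OF K_S0 z(1)] by metis
    then have "fscale (1 / z A) (fscale (z A) (ebas A)) \<in> N" by (rule scN)
    then have eA: "ebas A \<in> N" using zA by (simp add: fscale_def)
    have toD: "ebas B \<in> N \<Longrightarrow> B \<in> ?X \<Longrightarrow> ebas (Dm la) \<in> N" for B
    proof (induction B rule: measure_induct_rule[of "\<lambda>B. mm n (ro n B)"])
      case (less B)
      show ?case
      proof (cases "B = Dm la")
        case True then show ?thesis using less by simp
      next
        case False
        then obtain i where i: "Suc i < n" "0 < ro n B (Suc i)" "Emv B i \<in> ?X"
          "mm n (ro n (Emv B i)) < mm n (ro n B)"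
          using path[OF la less.prems(2)] by blast
        have "?act (E_op n r i) (ebas B) = ebas (Emv B i)" using S_E_ebas less.prems(2) i by blast
        then have "ebas (Emv B i) \<in> N" using cl[OF S0.gen_e[OF i(1)] less.prems(1)] by simp
        then show ?thesis using less.IH i by blast
      qed
    qed
    have eD: "ebas (Dm la) \<in> N" using toD[OF eA A] .
    have all: "B \<in> ?X \<Longrightarrow> ebas B \<in> N" for B
    proof (induction B rule: measure_induct_rule[of "\<lambda>B. mm n (ro n B)"])
      case (less B)
      show ?case
      proof (cases "B = Dm la")
        case True then show ?thesis using eD by simp
      next
        case False
        then obtain i where i: "Suc i < n" "Emv B i \<in> ?X" "0 < ro n (Emv B i) i"
          "Fmv (Emv B i) i = B" "mm n (ro n (Emv B i)) < mm n (ro n B)"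
          using path[OF la less.prems] by blast
        have e1: "ebas (Emv B i) \<in> N" using less.IH i by blast
        have "?act (F_op n r i) (ebas (Emv B i)) = ebas B"
          using S_F_ebas[of "Emv B i" n r la i] i less.prems by simp
        then show ?thesis using cl[OF S0.gen_f[OF i(1)] e1] by simp
      qed
    qed
    have "span_of ?X \<subseteq> N"
    proof
      fix v assume v: "v \<in> span_of ?X"
      have fin: "finite ?X" using finite_subset[OF cb_mats finite_mats] .
      have "(\<Sum>A\<in>?X. fscale (v A) (ebas A)) \<in> N"
        by (rule module.subspace_sum[OF mod_fscale subN]) (use all scN in auto)
      then show "v \<in> N" using span_of_decomp[OF fin v] by simp
    qed
    then show ?thesis using NS S_carrier_eq by blast
  qed
  then show ?thesis using S_module ne by (simp add: is_simple_module_def)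
qed


lemma simple_cyclic:
  fixes sm :: "complex \<Rightarrow> 'm::ab_group_add \<Rightarrow> 'm"
  assumes S: "is_simple_module n r sm M act" and w: "w \<in> M" "w \<noteq> 0" and u: "u \<in> M"
  shows "\<exists>b\<in>S0 n r. act b w = u"
proof -
  have MOD: "is_module n r sm M act" using S by (simp add: is_simple_module_def)
  interpret module sm by (rule m_mod[OF MOD])
  define N where "N = {act b w | b. b \<in> S0 n r}"
  have sub: "is_submodule n r sm M act N"
    unfolding is_submodule_def
  proof (intro conjI ballI)
    show "N \<subseteq> M" using m_closed[OF MOD _ w(1)] N_def by auto
    show "subspace N" unfolding subspace_def
    proof (intro conjI ballI allI)
      show "0 \<in> N" using m_act0[OF MOD w(1)] S0.zero N_def by force
      fix x y assume "x \<in> N" "y \<in> N"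
      then obtain b b' where "b \<in> S0 n r" "b' \<in> S0 n r" "x = act b w" "y = act b' w" using N_def by auto
      then show "x + y \<in> N" using m_plus[OF MOD _ _ w(1)] S0.add N_def by force
    next
      fix c x assume "x \<in> N"
      then obtain b where "b \<in> S0 n r" "x = act b w" using N_def by auto
      then show "sm c x \<in> N" using m_smult[OF MOD _ w(1), of b c] S0.smult[of b n r c] N_def by force
    qed
    fix a x assume "a \<in> S0 n r" "x \<in> N"
    then obtain b where "b \<in> S0 n r" "x = act b w" using N_def by auto
    then show "act a x \<in> N" using m_comp[OF MOD \<open>a \<in> S0 n r\<close> _ w(1), of b] S0.mult[OF \<open>a \<in> S0 n r\<close>] N_def by force
  qed
  have "w \<in> N" using m_one[OF MOD w(1)] S0one_S0 N_def by force
  then have "N = M" using S sub w(2) by (auto simp: is_simple_module_def)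
  then show ?thesis using u N_def by auto
qed

lemma iso_cyclic:
  fixes sm :: "complex \<Rightarrow> 'm::ab_group_add \<Rightarrow> 'm" and sm' :: "complex \<Rightarrow> 'k::ab_group_add \<Rightarrow> 'k"
  assumes S1: "is_simple_module n r sm M act" and S2: "is_simple_module n r sm' M' act'"
    and x: "x \<in> M" "x \<noteq> 0" and x': "x' \<in> M'" "x' \<noteq> 0"
    and ann: "\<And>a. a \<in> S0 n r \<Longrightarrow> act a x = 0 \<longleftrightarrow> act' a x' = 0"
  shows "module_iso n r sm M act sm' M' act'"
proof -
  have M1: "is_module n r sm M act" using S1 by (simp add: is_simple_module_def)
  have M2: "is_module n r sm' M' act'" using S2 by (simp add: is_simple_module_def)
  interpret m1: module sm by (rule m_mod[OF M1])
  interpret m2: module sm' by (rule m_mod[OF M2])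
  have wd: "act' a x' = act' b x'" if "a \<in> S0 n r" "b \<in> S0 n r" "act a x = act b x" for a b
  proof -
    let ?d = "a + (\<lambda>v. fscale (-1) (b v))"
    have dS: "?d \<in> S0 n r" using that by (intro S0.add S0.smult)
    have "act ?d x = act a x + sm (-1) (act b x)"
      using m_plus[OF M1 that(1) S0.smult[OF that(2)] x(1)] m_smult[OF M1 that(2) x(1)] by simp
    also have "\<dots> = 0" using that(3) by simp
    finally have "act' ?d x' = 0" using ann[OF dS] by simp
    moreover have "act' ?d x' = act' a x' + sm' (-1) (act' b x')"
      using m_plus[OF M2 that(1) S0.smult[OF that(2)] x'(1)] m_smult[OF M2 that(2) x'(1)] by simp
    ultimately show ?thesis by (simp add: eq_neg_iff_add_eq_0[symmetric])
  qed
  have wd2: "act a x = act b x" if "a \<in> S0 n r" "b \<in> S0 n r" "act' a x' = act' b x'" for a b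
  proof -
    let ?d = "a + (\<lambda>v. fscale (-1) (b v))"
    have dS: "?d \<in> S0 n r" using that by (intro S0.add S0.smult)
    have "act' ?d x' = act' a x' + sm' (-1) (act' b x')"
      using m_plus[OF M2 that(1) S0.smult[OF that(2)] x'(1)] m_smult[OF M2 that(2) x'(1)] by simp
    also have "\<dots> = 0" using that(3) by simp
    finally have "act ?d x = 0" using ann[OF dS] by simp
    moreover have "act ?d x = act a x + sm (-1) (act b x)"
      using m_plus[OF M1 that(1) S0.smult[OF that(2)] x(1)] m_smult[OF M1 that(2) x(1)] by simp
    ultimately show ?thesis by (simp add: eq_neg_iff_add_eq_0[symmetric])
  qed
  define g where "g u = (SOME a. a \<in> S0 n r \<and> act a x = u)" for u
  define f where "f u = act' (g u) x'" for u
  have g: "g u \<in> S0 n r \<and> act (g u) x = u" if "u \<in> M" for u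
    using simple_cyclic[OF S1 x that] unfolding g_def by (metis (mono_tags, lifting) someI_ex)
  have fa: "f (act a x) = act' a x'" if "a \<in> S0 n r" for a
    using wd[OF _ that] g[OF m_closed[OF M1 that x(1)]] unfolding f_def by blast
  have bij: "bij_betw f M M'"
  proof (rule bij_betwI')
    fix u v assume "u \<in> M" "v \<in> M"
    then show "(f u = f v) = (u = v)" using g wd2 unfolding f_def by metis
  next
    fix u assume "u \<in> M" then show "f u \<in> M'" using g m_closed[OF M2 _ x'(1)] unfolding f_def by blast
  next
    fix v assume v: "v \<in> M'"
    obtain a where a: "a \<in> S0 n r" "act' a x' = v" using simple_cyclic[OF S2 x' v] by blast
    show "\<exists>u\<in>M. v = f u" using fa[OF a(1)] a m_closed[OF M1 a(1) x(1)] by metis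
  qed
  have add: "f (u + v) = f u + f v" if "u \<in> M" "v \<in> M" for u v
  proof -
    have "u + v = act (g u + g v) x" using g[OF that(1)] g[OF that(2)] m_plus[OF M1 _ _ x(1)] by simp
    then have "f (u + v) = act' (g u + g v) x'" using fa S0.add g that by metis
    also have "\<dots> = f u + f v" using m_plus[OF M2 _ _ x'(1)] g that unfolding f_def by simp
    finally show ?thesis .
  qed
  have scl: "f (sm c u) = sm' c (f u)" if "u \<in> M" for c u
  proof -
    have "sm c u = act (\<lambda>v. fscale c (g u v)) x" using g[OF that] m_smult[OF M1 _ x(1)] by simp
    then have "f (sm c u) = act' (\<lambda>v. fscale c (g u v)) x'" using fa S0.smult g that by metis
    also have "\<dots> = sm' c (f u)" using m_smult[OF M2 _ x'(1)] g that unfolding f_def by simp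
    finally show ?thesis .
  qed
  have com: "f (act b u) = act' b (f u)" if "b \<in> S0 n r" "u \<in> M" for b u
  proof -
    have "act b u = act (b \<circ> g u) x" using g[OF that(2)] m_comp[OF M1 that(1) _ x(1)] by simp
    then have "f (act b u) = act' (b \<circ> g u) x'" using fa S0.mult[OF that(1)] g that(2) by metis
    also have "\<dots> = act' b (f u)" using m_comp[OF M2 that(1) _ x'(1)] g that(2) unfolding f_def by simp
    finally show ?thesis .
  qed
  show ?thesis unfolding module_iso_def using bij add scl com by blast
qed


lemma S_K_D: "la \<in> comps n r \<Longrightarrow> S_act n r la (K_op n r la) (ebas (Dm la)) = ebas (Dm la)"
  using S_K_iso[OF ebas_span[OF Dm_cb] Dm_cb, of la n r] by (simp add: Dm_ro ebas_def fscale_def)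

lemma proj_ebas_out: "A \<notin> X \<Longrightarrow> proj X (ebas A) = 0"
  by (rule ext) (auto simp: proj_def ebas_def)

lemma S_E_D: assumes la: "la \<in> comps_bullet n r" and i: "Suc i < n"
  shows "S_act n r la (E_op n r i) (ebas (Dm la)) = 0"
proof -
  have lac: "la \<in> comps n r" using la by (rule bullet_comps)
  have Dm: "Dm la \<in> mats n r" by (rule Dm_mats[OF lac])
  show ?thesis
  proof (cases "0 < la (Suc i)")
    case True
    have nin: "Emv (Dm la) i \<notin> cb n r la" using E_Dm_notcb[OF la i True] by (auto simp: cb_iff)
    have "E_op n r i (ebas (Dm la)) = ebas (Emv (Dm la) i)" using E_ebas[OF Dm] True Dm_ro[OF lac] by simp
    then show ?thesis using nin by (simp add: S_act_eq proj_ebas_out)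
  next
    case False
    then show ?thesis using Dm lac by (simp add: S_act_eq E_ebas Dm_ro proj_def fun_eq_iff)
  qed
qed

lemma S_noniso:
  assumes la: "la \<in> comps_bullet n r" and mu: "mu \<in> comps_bullet n r"
    and iso: "module_iso n r fscale (S_carrier n r la) (S_act n r la) fscale (S_carrier n r mu) (S_act n r mu)"
  shows "la = mu"
proof (rule ccontr)
  assume ne: "la \<noteq> mu"
  have lac: "la \<in> comps n r" using la by (rule bullet_comps)
  have muc: "mu \<in> comps n r" using mu by (rule bullet_comps)
  obtain f where bij: "bij_betw f (S_carrier n r la) (S_carrier n r mu)"
    and add: "\<And>x y. x \<in> S_carrier n r la \<Longrightarrow> y \<in> S_carrier n r la \<Longrightarrow> f (x + y) = f x + f y"
    and com: "\<And>a x. a \<in> S0 n r \<Longrightarrow> x \<in> S_carrier n r la \<Longrightarrow> f (S_act n r la a x) = S_act n r mu a (f x)"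
    using iso unfolding module_iso_def by blast
  let ?e = "ebas (Dm la)"
  have eS: "?e \<in> S_carrier n r la" using ebas_span[OF Dm_cb[OF lac]] S_carrier_eq by simp
  have zS: "0 \<in> S_carrier n r la" using S_carrier_eq span_of_zero by simp
  have f0: "f 0 = 0" using add[OF zS zS] by simp
  define w where "w = f ?e"
  have wS: "w \<in> span_of (cb n r mu)" using bij eS S_carrier_eq unfolding w_def by (metis bij_betwE)
  have wnz: "w \<noteq> 0"
  proof
    assume "w = 0"
    then have "f ?e = f 0" using f0 w_def by simp
    then have "?e = 0" using bij eS zS by (metis bij_betw_inv_into_left)
    then show False using ebas_nz by blast
  qed
  have wK: "S_act n r mu (K_op n r la) w = w"
    using com[OF K_S0 eS, of la] S_K_D[OF lac] w_def by simp
  obtain B where wB: "w B \<noteq> 0" using wnz by (auto simp: fun_eq_iff)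
  have Bin: "B \<in> cb n r mu" "ro n B = la"
  proof -
    have "S_act n r mu (K_op n r la) w B \<noteq> 0" using wK wB by simp
    then show "B \<in> cb n r mu" "ro n B = la" by (auto simp: S_act_eq proj_def K_apply split: if_splits)
  qed
  have wf: "w = fscale (w B) (ebas B)" using S_K_iso[OF wS Bin(1)] Bin(2) wK by simp
  show False
  proof (cases "B = Dm mu")
    case True
    then show False using Bin(2) Dm_ro[OF muc] ne by simp
  next
    case False
    obtain i where i: "Suc i < n" "0 < ro n B (Suc i)" "Emv B i \<in> cb n r mu"
      using path[OF mu Bin(1) False] by blast
    have ES: "E_op n r i \<in> S0 n r" by (rule S0.gen_e[OF i(1)])
    have "S_act n r mu (E_op n r i) w = fscale (w B) (S_act n r mu (E_op n r i) (ebas B))"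
      by (subst wf) (simp add: S_act_eq lin_scale[OF S0_lin[OF ES]] proj_scale del: fscale_apply)
    also have "\<dots> = fscale (w B) (ebas (Emv B i))" using S_E_ebas[OF Bin(1) i(2,3)] by simp
    finally have "S_act n r mu (E_op n r i) w \<noteq> 0" using wB by (auto simp: fun_eq_iff ebas_def)
    moreover have "S_act n r mu (E_op n r i) w = 0"
      using com[OF ES eS] S_E_D[OF la i(1)] f0 w_def by simp
    ultimately show False by simp
  qed
qed


lemma prod_module:
  fixes sm :: "complex \<Rightarrow> 'm::ab_group_add \<Rightarrow> 'm" and sm' :: "complex \<Rightarrow> 'k::ab_group_add \<Rightarrow> 'k"
  assumes M1: "is_module n r sm M act" and M2: "is_module n r sm' M' act'"
  shows "is_module n r (\<lambda>c p. (sm c (fst p), sm' c (snd p))) (M \<times> M') (\<lambda>a p. (act a (fst p), act' a (snd p)))"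
proof -
  interpret m1: module sm by (rule m_mod[OF M1])
  interpret m2: module sm' by (rule m_mod[OF M2])
  have vs: "vector_space (\<lambda>c p. (sm c (fst p), sm' c (snd p)))"
    unfolding vector_space_def
    by (simp add: prod_eq_iff m1.scale_right_distrib m2.scale_right_distrib
        m1.scale_left_distrib m2.scale_left_distrib)
  have mo: "module (\<lambda>c p. (sm c (fst p), sm' c (snd p)))" using vs by (simp add: module_iff_vector_space)
  have sub: "module.subspace (\<lambda>c p. (sm c (fst p), sm' c (snd p))) (M \<times> M')"
    unfolding module.subspace_def[OF mo]
    using m_zeroM[OF M1] m_zeroM[OF M2] m_addM[OF M1] m_addM[OF M2] m_scaleM[OF M1] m_scaleM[OF M2]
    by (auto simp: zero_prod_def)
  show ?thesis unfolding is_module_def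
  proof (intro conjI ballI allI)
    show "vector_space (\<lambda>c p. (sm c (fst p), sm' c (snd p)))" by (rule vs)
    show "module.subspace (\<lambda>c p. (sm c (fst p), sm' c (snd p))) (M \<times> M')" by (rule sub)
  next
    fix a x assume "a \<in> S0 n r" "x \<in> M \<times> M'"
    then show "(act a (fst x), act' a (snd x)) \<in> M \<times> M'"
      using m_closed[OF M1] m_closed[OF M2] by (auto simp: mem_Times_iff)
  next
    fix a x y assume "a \<in> S0 n r" "x \<in> M \<times> M'" "y \<in> M \<times> M'"
    then show "(act a (fst (x + y)), act' a (snd (x + y))) = (act a (fst x), act' a (snd x)) + (act a (fst y), act' a (snd y))"
      using m_add[OF M1] m_add[OF M2] by (auto simp: mem_Times_iff)
  next
    fix a c x assume "a \<in> S0 n r" "x \<in> M \<times> M'"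
    then show "(act a (fst (sm c (fst x), sm' c (snd x))), act' a (snd (sm c (fst x), sm' c (snd x)))) =
           (sm c (fst (act a (fst x), act' a (snd x))), sm' c (snd (act a (fst x), act' a (snd x))))"
      using m_scale[OF M1] m_scale[OF M2] by (auto simp: mem_Times_iff)
  next
    fix a b x assume "a \<in> S0 n r" "b \<in> S0 n r" "x \<in> M \<times> M'"
    then show "(act (a + b) (fst x), act' (a + b) (snd x)) = (act a (fst x), act' a (snd x)) + (act b (fst x), act' b (snd x))"
      using m_plus[OF M1] m_plus[OF M2] by (auto simp: mem_Times_iff simp del: plus_fun_apply)
  next
    fix a c x assume "a \<in> S0 n r" "x \<in> M \<times> M'"
    then show "(act (\<lambda>v. fscale c (a v)) (fst x), act' (\<lambda>v. fscale c (a v)) (snd x)) =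
           (sm c (fst (act a (fst x), act' a (snd x))), sm' c (snd (act a (fst x), act' a (snd x))))"
      using m_smult[OF M1] m_smult[OF M2] by (auto simp: mem_Times_iff simp del: fscale_apply)
  next
    fix a b x assume "a \<in> S0 n r" "b \<in> S0 n r" "x \<in> M \<times> M'"
    then show "(act (a \<circ> b) (fst x), act' (a \<circ> b) (snd x)) =
           (act a (fst (act b (fst x), act' b (snd x))), act' a (snd (act b (fst x), act' b (snd x))))"
      using m_comp[OF M1] m_comp[OF M2] by (auto simp: mem_Times_iff simp del: comp_apply)
  next
    fix x assume "x \<in> M \<times> M'"
    then show "(act (S0one n r) (fst x), act' (S0one n r) (snd x)) = x"
      using m_one[OF M1] m_one[OF M2] by (auto simp: mem_Times_iff)
  qed
qed


lemma mm_Esh: assumes "Suc i < n" "0 < la (Suc i)" shows "mm n (Esh la i) < mm n la"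
proof -
  have "Fsh (Esh la i) i = la" using assms by (auto simp: Fsh_def Esh_def fun_eq_iff)
  moreover have "mm n (Fsh (Esh la i) i) = mm n (Esh la i) + 1"
    by (rule mm_Fsh[OF assms(1)]) (simp add: Esh_def)
  ultimately show ?thesis by simp
qed

lemma S_complete:
  fixes sm :: "complex \<Rightarrow> 'm::ab_group_add \<Rightarrow> 'm"
  assumes SM: "is_simple_module n r sm M act"
  shows "\<exists>la\<in>comps_bullet n r. module_iso n r sm M act fscale (S_carrier n r la) (S_act n r la)"
proof -
  have MOD: "is_module n r sm M act" using SM by (simp add: is_simple_module_def)
  interpret module sm by (rule m_mod[OF MOD])
  note cmp = m_comp[OF MOD] and a0 = m_act0[OF MOD] and ax0 = m_actx0[OF MOD] and cl = m_closed[OF MOD]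
  obtain x0 where x0: "x0 \<in> M" "x0 \<noteq> 0" using SM m_zeroM[OF MOD] by (auto simp: is_simple_module_def)
  have "\<exists>nu. act (K_op n r nu) x0 \<noteq> 0"
  proof (rule ccontr)
    assume "\<not> ?thesis"
    then have z: "\<And>nu. act (K_op n r nu) x0 = 0" by blast
    have "x0 = act (S0one n r) x0" using m_one[OF MOD x0(1)] by simp
    also have "\<dots> = (\<Sum>nu\<in>ro n ` mats n r. act (K_op n r nu) x0)"
      unfolding S0one_sum by (rule m_sum[OF MOD]) (use finite_mats K_S0 x0 in auto)
    also have "\<dots> = 0" using z by simp
    finally show False using x0 by simp
  qed
  then obtain nu0 where "act (K_op n r nu0) x0 \<noteq> 0" by blast
  define P where "P nu \<longleftrightarrow> (\<exists>z\<in>M. act (K_op n r nu) z \<noteq> 0)" for nu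
  have "P nu0" using x0 \<open>act (K_op n r nu0) x0 \<noteq> 0\<close> P_def by blast
  then obtain la where Pla: "P la" and lamin: "\<And>nu. P nu \<Longrightarrow> mm n la \<le> mm n nu"
    using ex_has_least_nat[of P nu0 "mm n"] by blast
  obtain z where z: "z \<in> M" "act (K_op n r la) z \<noteq> 0" using Pla P_def by blast
  have lac: "la \<in> comps n r"
  proof (rule ccontr)
    assume "la \<notin> comps n r"
    then have "act (K_op n r la) z = 0" using K_notcomps[of la n r] a0[OF z(1)] by simp
    then show False using z by simp
  qed
  define x where "x = act (K_op n r la) z"
  have xM: "x \<in> M" using cl[OF K_S0 z(1)] x_def by simp
  have xnz: "x \<noteq> 0" using z x_def by simp
  have Kx: "act (K_op n r la) x = x"
    using cmp[OF K_S0 K_S0 z(1), of la la] O1[of n r la la] x_def by simp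
  have Ex: "act (E_op n r i) x = 0" if i: "Suc i < n" for i
  proof -
    have ES: "E_op n r i \<in> S0 n r" by (rule S0.gen_e[OF i])
    have EKS: "E_op n r i \<circ> K_op n r la \<in> S0 n r" by (rule S0.mult[OF ES K_S0])
    have e1: "act (E_op n r i) x = act (E_op n r i \<circ> K_op n r la) x" using cmp[OF ES K_S0 xM] Kx by simp
    show ?thesis
    proof (cases "la (Suc i) = 0")
      case True
      then show ?thesis using e1 O6a[of la i n r] a0[OF xM] by simp
    next
      case False
      have "K_op n r (Esh la i) \<circ> E_op n r i \<circ> K_op n r la = E_op n r i \<circ> K_op n r la"
        using O3[OF i, of r "Esh la i" la] by simp
      then have "act (E_op n r i \<circ> K_op n r la) x = act (K_op n r (Esh la i)) (act (E_op n r i \<circ> K_op n r la) x)"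
        using cmp[OF K_S0 EKS xM] by (metis comp_assoc)
      moreover have "\<not> P (Esh la i)" using lamin mm_Esh[OF i] False by (metis leD not_gr0)
      ultimately show ?thesis using e1 cl[OF EKS xM] P_def by auto
    qed
  qed
  have adj: "la (Suc i) = 0" if "la i = 0" for i
  proof (cases "Suc i < n")
    case False then show ?thesis using lac by (simp add: comps_def)
  next
    case i: True
    show ?thesis
    proof (rule ccontr)
      assume "la (Suc i) \<noteq> 0"
      then have FEK: "F_op n r i \<circ> E_op n r i \<circ> K_op n r la = K_op n r la" using O7[of i n la r] i that by simp
      have ES: "E_op n r i \<in> S0 n r" by (rule S0.gen_e[OF i])
      have FS: "F_op n r i \<in> S0 n r" by (rule S0.gen_f[OF i])
      have "x = act (F_op n r i \<circ> E_op n r i \<circ> K_op n r la) x" using FEK Kx by simp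
      also have "\<dots> = act (F_op n r i) (act (E_op n r i) (act (K_op n r la) x))"
        using cmp[OF S0.mult[OF FS ES] K_S0 xM] cmp[OF FS ES cl[OF K_S0 xM]] by simp
      also have "\<dots> = 0" using Kx Ex[OF i] ax0[OF FS] by simp
      finally show False using xnz by simp
    qed
  qed
  have bul: "la j = 0" if "i < j" "la i = 0" for i j
    using that by (induction j) (auto simp: less_Suc_eq adj)
  have lab: "la \<in> comps_bullet n r" using lac bul by (auto simp: comps_bullet_def)
  define e where "e = ebas (Dm la)"
  have eS: "e \<in> S_carrier n r la" using ebas_span[OF Dm_cb[OF lac]] S_carrier_eq e_def by simp
  have enz: "e \<noteq> 0" using ebas_nz e_def by simp
  have eD: "e (Dm la) = 1" by (simp add: e_def ebas_def)
  have SMOD: "is_module n r fscale (S_carrier n r la) (S_act n r la)" by (rule S_module)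
  have SS: "is_simple_module n r fscale (S_carrier n r la) (S_act n r la)" by (rule S_simple[OF lab])
  note PM = prod_module[OF MOD SMOD]
  have hw: "\<exists>c. act (K_op n r la \<circ> a) x = sm c x \<and> S_act n r la (K_op n r la \<circ> a) e = fscale c e"
    if a: "a \<in> S0 n r" for a
  proof -
    have "\<exists>c. (\<lambda>a p. (act a (fst p), S_act n r la a (snd p))) (K_op n r la \<circ> a) (x, e)
            = (\<lambda>c p. (sm c (fst p), fscale c (snd p))) c (x, e)"
    proof (rule hw_scalar[OF PM])
      show "(x, e) \<in> M \<times> S_carrier n r la" using xM eS by simp
      show "(act (K_op n r la) (fst (x, e)), S_act n r la (K_op n r la) (snd (x, e))) = (x, e)"
        using Kx S_K_D[OF lac] e_def by simp
      fix i assume i: "Suc i < n"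
      show "(act (E_op n r i) (fst (x, e)), S_act n r la (E_op n r i) (snd (x, e))) = 0"
        using Ex[OF i] S_E_D[OF lab i] e_def by (simp add: zero_prod_def)
    qed (rule a)
    then show ?thesis by simp
  qed
  have Sc: "S_act n r la b (S_act n r la a v) = S_act n r la (b \<circ> a) v"
    if "a \<in> S0 n r" "b \<in> S0 n r" "v \<in> S_carrier n r la" for a b v
    using m_comp[OF SMOD that(2,1,3)] by simp
  have eK: "S_act n r la (K_op n r la) e = e" using S_K_D[OF lac] e_def by simp
  have ann: "act a x = 0 \<longleftrightarrow> S_act n r la a e = 0" if a: "a \<in> S0 n r" for a
  proof
    assume ax: "act a x = 0"
    show "S_act n r la a e = 0"
    proof (rule ccontr)
      assume nz: "S_act n r la a e \<noteq> 0"
      obtain b where b: "b \<in> S0 n r" "S_act n r la b (S_act n r la a e) = e"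
        using simple_cyclic[OF SS m_closed[OF SMOD a eS] nz eS] by blast
      have ba: "b \<circ> a \<in> S0 n r" by (rule S0.mult[OF b(1) a])
      obtain c where c: "act (K_op n r la \<circ> (b \<circ> a)) x = sm c x"
        "S_act n r la (K_op n r la \<circ> (b \<circ> a)) e = fscale c e" using hw[OF ba] by blast
      have s1: "S_act n r la (K_op n r la \<circ> (b \<circ> a)) e = S_act n r la (K_op n r la) (S_act n r la (b \<circ> a) e)"
        by (rule m_comp[OF SMOD K_S0 ba eS])
      have s2: "S_act n r la (b \<circ> a) e = S_act n r la b (S_act n r la a e)"
        by (rule m_comp[OF SMOD b(1) a eS])
      have Se: "S_act n r la (K_op n r la \<circ> (b \<circ> a)) e = e"
        unfolding s1 s2 b(2) eK ..
      have "fscale c e = e" using trans[OF c(2)[symmetric] Se] .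
      then have "fscale c e (Dm la) = e (Dm la)" by (rule fun_cong)
      then have c1: "c = 1" using eD by (simp del: fscale_apply add: fscale_def)
      have t1: "act (K_op n r la \<circ> (b \<circ> a)) x = act (K_op n r la) (act (b \<circ> a) x)"
        by (rule cmp[OF K_S0 ba xM])
      have t2: "act (b \<circ> a) x = act b (act a x)" by (rule cmp[OF b(1) a xM])
      have "act (K_op n r la \<circ> (b \<circ> a)) x = 0"
        unfolding t1 t2 ax ax0[OF b(1)] ax0[OF K_S0] ..
      then have "sm 1 x = 0" using c(1) c1 by simp
      then show False using xnz by simp
    qed
  next
    assume ae: "S_act n r la a e = 0"
    show "act a x = 0"
    proof (rule ccontr)
      assume nz: "act a x \<noteq> 0"
      obtain b where b: "b \<in> S0 n r" "act b (act a x) = x"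
        using simple_cyclic[OF SM cl[OF a xM] nz xM] by blast
      have ba: "b \<circ> a \<in> S0 n r" by (rule S0.mult[OF b(1) a])
      obtain c where c: "act (K_op n r la \<circ> (b \<circ> a)) x = sm c x"
        "S_act n r la (K_op n r la \<circ> (b \<circ> a)) e = fscale c e" using hw[OF ba] by blast
      have s1: "S_act n r la (K_op n r la \<circ> (b \<circ> a)) e = S_act n r la (K_op n r la) (S_act n r la (b \<circ> a) e)"
        by (rule m_comp[OF SMOD K_S0 ba eS])
      have s2: "S_act n r la (b \<circ> a) e = S_act n r la b (S_act n r la a e)"
        by (rule m_comp[OF SMOD b(1) a eS])
      have Se: "S_act n r la (K_op n r la \<circ> (b \<circ> a)) e = 0"
        unfolding s1 s2 ae m_actx0[OF SMOD b(1)] m_actx0[OF SMOD K_S0] ..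
      have "fscale c e = 0" using trans[OF c(2)[symmetric] Se] .
      then have "fscale c e (Dm la) = 0 (Dm la)" by (rule fun_cong)
      then have c0: "c = 0" using eD by (simp del: fscale_apply add: fscale_def)
      have t1: "act (K_op n r la \<circ> (b \<circ> a)) x = act (K_op n r la) (act (b \<circ> a) x)"
        by (rule cmp[OF K_S0 ba xM])
      have t2: "act (b \<circ> a) x = act b (act a x)" by (rule cmp[OF b(1) a xM])
      have "act (K_op n r la \<circ> (b \<circ> a)) x = x"
        unfolding t1 t2 b(2) Kx ..
      then have "x = sm 0 x" using c(1) c0 by simp
      then show False using xnz by simp
    qed
  qed
  have "module_iso n r sm M act fscale (S_carrier n r la) (S_act n r la)"
    apply (rule iso_cyclic[OF SM SS xM xnz eS enz]) by (rule ann)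
  then show ?thesis using lab by (intro bexI)
qed

theorem mainTheorem4:
  fixes n r :: nat
  shows "(\<forall>la \<in> comps_bullet n r.
            is_simple_module n r fscale (S_carrier n r la) (S_act n r la))
       \<and> (\<forall>la \<in> comps_bullet n r. \<forall>mu \<in> comps_bullet n r.
            module_iso n r fscale (S_carrier n r la) (S_act n r la)
                           fscale (S_carrier n r mu) (S_act n r mu) \<longrightarrow> la = mu)
       \<and> (\<forall>(sm :: complex \<Rightarrow> 'm::ab_group_add \<Rightarrow> 'm) M act.
            is_simple_module n r sm M act \<longrightarrow>
            (\<exists>la \<in> comps_bullet n r.
               module_iso n r sm M act fscale (S_carrier n r la) (S_act n r la)))"
proof (intro conjI ballI allI impI)
  fix la assume "la \<in> comps_bullet n r"
  then show "is_simple_module n r fscale (S_carrier n r la) (S_act n r la)" by (rule S_simple)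
next
  fix la mu assume "la \<in> comps_bullet n r" "mu \<in> comps_bullet n r"
    "module_iso n r fscale (S_carrier n r la) (S_act n r la) fscale (S_carrier n r mu) (S_act n r mu)"
  then show "la = mu" by (rule S_noniso)
next
  fix sm :: "complex \<Rightarrow> 'm::ab_group_add \<Rightarrow> 'm" and M act
  assume "is_simple_module n r sm M act"
  then show "\<exists>la \<in> comps_bullet n r. module_iso n r sm M act fscale (S_carrier n r la) (S_act n r la)"
    by (rule S_complete)
qed


end
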